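(* Let $N=2$ with $r_{11}=1$ and $g\in(-2,2)$. The Finsleroid Indicatrix $\{R\in\mathbb{R}^2: K(g;R)=1\}$ is strongly convex, i.e. it is a closed curve bounding a convex region and its (Euclidean) curvature as a plane curve is strictly positive at every point.
   Context: Here $V_2=\mathbb{R}^2$ with points $R=(R^1,R^2)$, $Z=R^2$, $q(R)=|R^1|$; $h=\sqrt{1-g^2/4}$, $G=g/h$. Define $B(g;R)=Z^2+gqZ+q^2$, $A(g;R)=Z+\frac12 gq$, $\Phi(g;R)=\arctan\big(A/(hq)\big)$ if $q>0$, $\Phi=\pi/2$ if $q=0,Z>0$, $\Phi=-\pi/2$ if $q=0,Z<0$; $J(g;R)=e^{\frac12 G\Phi}$ and the Finsleroid metric function $K(g;R)=\sqrt{B(g;R)}\,J(g;R)$ ($K(g;0)=0$). *)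

theory Defs
  imports "HOL-Analysis.Analysis"
begin

text \<open>Points R = (R^1, R^2) of V_2 = R^2 are pairs; Z = R^2, q = abs R^1.\<close>

definition fh :: "real \<Rightarrow> real" where "fh g = sqrt (1 - g^2 / 4)"
definition fG :: "real \<Rightarrow> real" where "fG g = g / fh g"
definition fq :: "real \<times> real \<Rightarrow> real" where "fq R = \<bar>fst R\<bar>"
definition fZ :: "real \<times> real \<Rightarrow> real" where "fZ R = snd R"

definition fB :: "real \<Rightarrow> real \<times> real \<Rightarrow> real" where
  "fB g R = (fZ R)^2 + g * fq R * fZ R + (fq R)^2"
definition fA :: "real \<Rightarrow> real \<times> real \<Rightarrow> real" where
  "fA g R = fZ R + g * fq R / 2"

definition fPhi :: "real \<Rightarrow> real \<times> real \<Rightarrow> real" where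
  "fPhi g R = (if fq R > 0 then arctan (fA g R / (fh g * fq R))
               else if fZ R > 0 then pi / 2
               else if fZ R < 0 then - pi / 2
               else 0)"  \<comment> \<open>value at R = 0 irrelevant, K(g;0)=0\<close>

definition fJ :: "real \<Rightarrow> real \<times> real \<Rightarrow> real" where
  "fJ g R = exp (fG g * fPhi g R / 2)"

definition finsleroidK :: "real \<Rightarrow> real \<times> real \<Rightarrow> real" where
  "finsleroidK g R = (if R = (0, 0) then 0 else sqrt (fB g R) * fJ g R)"

definition signed_curvature :: "real \<times> real \<Rightarrow> real \<times> real \<Rightarrow> real" where
  "signed_curvature d1 d2 =
     (fst d1 * snd d2 - snd d1 * fst d2) / (sqrt ((fst d1)^2 + (snd d1)^2)) ^ 3"

end

theory Submission
  imports Defs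
begin

locale fins =
  fixes g :: real
  assumes gl: "-2 < g" and gu: "g < 2"
begin

abbreviation "h \<equiv> fh g"
abbreviation "G \<equiv> fG g"

lemma g4: "g^2 < 4"
proof -
  have a: "\<bar>g\<bar> < 2" using gl gu by simp
  have "\<bar>g\<bar>^2 < 2^2" by (rule power_strict_mono) (use a in auto)
  then show ?thesis by simp
qed

lemma h_sq: "h^2 = 1 - g^2/4"
proof -
  have "g^2 < 4" using g4 .
  then show ?thesis unfolding fh_def by simp
qed

lemma h_pos: "0 < h"
proof -
  have "g^2 < 4" using g4 .
  then show ?thesis unfolding fh_def by simp
qed

lemma g_eq: "g = G * h"
  using h_pos unfolding fG_def by simp

lemma G_rel: "1 + G^2/4 = 1/h^2"
  using h_pos h_sq unfolding fG_def by (simp add: field_simps)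

end

definition Kt :: "real \<Rightarrow> real \<Rightarrow> real \<Rightarrow> real" where
  "Kt G' u v = sqrt (u^2+v^2) * exp (G' * arctan (v / (sqrt (u^2+v^2) + u)))"

lemma arctan_half:
  fixes x y :: real
  assumes "x > 0"
  shows "arctan (y/x) = 2 * arctan (y / (sqrt (x^2+y^2) + x))"
proof -
  define r where "r = sqrt (x^2+y^2)"
  have r2: "r^2 = x^2+y^2" unfolding r_def by simp
  have ry: "\<bar>y\<bar> \<le> r" unfolding r_def by (simp add: real_sqrt_ge_abs2)
  have rp: "r \<ge> 0" unfolding r_def by simp
  define t where "t = y / (r + x)"
  have rx: "r + x > 0" using rp assms by simp
  have yl: "\<bar>y\<bar> < r + x" using ry assms by linarith
  have ta: "\<bar>t\<bar> = \<bar>y\<bar> / (r + x)" using rx unfolding t_def by (simp add: abs_divide)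
  have t1: "\<bar>t\<bar> < 1" unfolding ta using yl rx by (simp add: pos_divide_less_eq)
  have n: "(r+x)^2 - y^2 = 2*x*(r+x)" using r2 by (simp add: power2_eq_square algebra_simps)
  have "1 - t^2 = ((r+x)^2 - y^2)/(r+x)^2" using rx by (simp add: t_def power_divide field_simps)
  also have "\<dots> = 2*x/(r+x)" unfolding n using rx by (simp add: power2_eq_square)
  finally have e: "1 - t^2 = 2*x/(r+x)" .
  have ty: "t*(r+x) = y" using rx by (simp add: t_def)
  have "2 * t / (1 - t^2) = 2*t / (2*x/(r+x))" by (simp add: e)
  also have "\<dots> = (t * (r+x)) / x" using assms rx by (simp add: field_simps)
  finally have "2 * t / (1 - t^2) = y/x" unfolding ty .
  then have "2 * arctan t = arctan (y/x)" using arctan_double[OF t1] by simp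
  then show ?thesis unfolding t_def r_def by simp
qed

context fins begin

lemma B_eq: "fB g R = (h * fq R)^2 + (fA g R)^2"
  unfolding fB_def fA_def by (simp add: power_mult_distrib h_sq) (simp add: power2_eq_square algebra_simps)

lemma K_eq:
  assumes "R \<noteq> (0,0)"
  shows "finsleroidK g R = Kt G (h * fq R) (fA g R)"
proof -
  have K: "finsleroidK g R = sqrt (fB g R) * exp (G * fPhi g R / 2)"
    using assms unfolding finsleroidK_def fJ_def by simp
  show ?thesis
  proof (cases "fq R > 0")
    case True
    have "fPhi g R = 2 * arctan (fA g R / (sqrt ((h * fq R)^2 + (fA g R)^2) + h * fq R))"
      using True arctan_half[of "h * fq R" "fA g R"] h_pos unfolding fPhi_def by simp
    then show ?thesis unfolding K Kt_def B_eq by simp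
  next
    case False
    then have q0: "fq R = 0" unfolding fq_def by simp
    then have f0: "fst R = 0" unfolding fq_def by simp
    then have z0: "fZ R \<noteq> 0" using assms unfolding fZ_def by (metis prod.collapse)
    have A: "fA g R = fZ R" using q0 unfolding fA_def by simp
    show ?thesis
    proof (cases "fZ R > 0")
      case True
      then have "fPhi g R = pi/2" using q0 unfolding fPhi_def by simp
      moreover have "fA g R / (sqrt ((h * fq R)^2 + (fA g R)^2) + h * fq R) = 1"
        using A q0 True by simp
      ultimately show ?thesis unfolding K Kt_def B_eq by (simp add: arctan_one)
    next
      case False
      then have zn: "fZ R < 0" using z0 by simp
      then have "fPhi g R = - pi/2" using q0 unfolding fPhi_def by simp
      moreover have "fA g R / (sqrt ((h * fq R)^2 + (fA g R)^2) + h * fq R) = -1"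
        using A q0 zn by simp
      ultimately show ?thesis unfolding K Kt_def B_eq by (simp add: arctan_one arctan_minus)
    qed
  qed
qed

end

lemma alg_atan:
  fixes u v du dv r a :: real
  assumes r: "r > 0" "r * r = u * u+v * v" and ru: "r + u > 0" and a: "a = u * du + v * dv"
  shows "(dv * (r+u) - v * (a/r + du))/(r+u)^2 / (1 + (v/(r+u))^2) = (u * dv - v * du)/(2 * (u * u+v * v))"
proof -
  define R where "R = r + u"
  have R: "R > 0" using ru R_def by simp
  have s: "R^2 + v^2 = 2 * r * R" unfolding R_def using r(2) by (simp add: power2_eq_square algebra_simps)
  have "1 + (v/R)^2 = (R^2+v^2)/R^2" using R by (simp add: field_simps power2_eq_square)
  then have e1: "1 + (v/R)^2 = 2 * r/R" unfolding s using R by (simp add: power2_eq_square)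
  have num: "(dv * R - v * (a/r + du)) = (u * dv - v * du) * R / r"
  proof -
    have "(dv * R - v * (a/r + du)) * r = dv * R * r - v * a - v * du * r"
      using r by (simp add: algebra_simps)
    also have "\<dots> = (u * dv - v * du) * R"
      unfolding R_def a using r(2) by algebra
    finally have "(dv * R - v * (a/r + du)) * r = (u * dv - v * du) * R" .
    then show ?thesis using r by (simp add: eq_divide_eq)
  qed
  have "(dv * R - v * (a/r + du))/R^2 / (1 + (v/R)^2) = ((u * dv - v * du) * R / r) / R^2 / (2 * r/R)"
    unfolding num e1 ..
  also have "\<dots> = (u * dv - v * du)/(2 * (r * r))" using r(1) R by (simp add: field_simps power2_eq_square)
  finally show ?thesis unfolding R_def r(2) .
qed

definition KtL where "KtL G' u0 du v0 dv t = Kt G' (u0+t * du) (v0+t * dv)"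
definition Kd where "Kd G' u0 du v0 dv t = KtL G' u0 du v0 dv t *
   (((u0+t * du) * du + (v0+t * dv) * dv) + G'*(u0 * dv - v0 * du)/2) / ((u0+t * du)^2 + (v0+t * dv)^2)"

lemma KtL_deriv:
  assumes pos: "sqrt ((u0+t * du)^2+(v0+t * dv)^2) + (u0+t * du) > 0"
  shows "(KtL G' u0 du v0 dv has_real_derivative Kd G' u0 du v0 dv t) (at t)"
proof -
  define U where "U = (\<lambda>t. u0+t * du)"
  define V where "V = (\<lambda>t. v0+t * dv)"
  define N where "N = (\<lambda>t. (U t)^2 + (V t)^2)"
  define r where "r = sqrt (N t)"
  define a where "a = U t * du + V t * dv"
  define c where "c = U t * dv - V t * du"
  have c': "c = u0 * dv - v0 * du" unfolding c_def U_def V_def by (simp add: algebra_simps)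
  have pos': "r + U t > 0" using pos unfolding r_def N_def U_def V_def by simp
  have Nnn: "N t \<ge> 0" unfolding N_def by simp
  have Npos: "N t > 0"
  proof (rule ccontr)
    assume "\<not> N t > 0"
    then have "N t = 0" using Nnn by simp
    then have "U t = 0" unfolding N_def by (simp add: sum_power2_eq_zero_iff)
    then show False using pos' \<open>N t = 0\<close> unfolding r_def by simp
  qed
  have rpos: "r > 0" unfolding r_def using Npos by simp
  have rr: "r * r = U t * U t + V t * V t" unfolding r_def using Nnn by (simp add: N_def power2_eq_square flip: power2_eq_square)
  have dN: "(N has_real_derivative 2 * a) (at t)"
    unfolding N_def U_def V_def a_def by (auto intro!: derivative_eq_intros simp: algebra_simps)
  have dr: "((\<lambda>t. sqrt (N t)) has_real_derivative a / r) (at t)"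
  proof -
    have "((\<lambda>t. sqrt (N t)) has_real_derivative (inverse (sqrt (N t)) / 2) * (2 * a)) (at t)"
      by (rule DERIV_chain2[OF DERIV_real_sqrt[OF Npos] dN])
    then show ?thesis unfolding r_def by (simp add: field_simps)
  qed
  define w where "w = (\<lambda>t. V t / (sqrt (N t) + U t))"
  have dw: "(w has_real_derivative (dv * (r+U t) - V t * (a/r + du))/(r+U t)^2) (at t)"
  proof -
    have "(w has_real_derivative (dv * (sqrt (N t) + U t) - V t * (a/r + du)) / ((sqrt (N t) + U t) * (sqrt (N t) + U t))) (at t)"
    proof -
      have dV: "(V has_real_derivative dv) (at t)" unfolding V_def by (auto intro!: derivative_eq_intros)
      have dU: "(U has_real_derivative du) (at t)" unfolding U_def by (auto intro!: derivative_eq_intros)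
      have dden: "((\<lambda>t. sqrt (N t) + U t) has_real_derivative a/r + du) (at t)" by (rule DERIV_add[OF dr dU])
      have nz: "sqrt (N t) + U t \<noteq> 0" using pos' unfolding r_def by simp
      show ?thesis unfolding w_def using DERIV_divide[OF dV dden nz] by simp
    qed
    then show ?thesis unfolding r_def by (simp add: power2_eq_square)
  qed
  have datan: "((\<lambda>t. arctan (w t)) has_real_derivative c/(2 * (U t * U t+V t * V t))) (at t)"
  proof -
    have "((\<lambda>t. arctan (w t)) has_real_derivative inverse (1 + (w t)^2) * ((dv * (r+U t) - V t * (a/r + du))/(r+U t)^2)) (at t)"
      by (rule DERIV_chain2[OF DERIV_arctan dw])
    moreover have "w t = V t / (r + U t)" unfolding w_def r_def ..
    ultimately show ?thesis
      using alg_atan[OF rpos rr pos' a_def] unfolding c_def by (simp add: field_simps)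
  qed
  define E where "E = exp (G' * arctan (w t))"
  have dK: "((\<lambda>t. sqrt (N t) * exp (G' * arctan (w t))) has_real_derivative
      (a/r) * E + r * (E * (G' * (c/(2 * (U t * U t+V t * V t)))))) (at t)"
    unfolding E_def r_def
    by (rule derivative_eq_intros dr datan refl | simp add: r_def)+
  have fun_eq: "KtL G' u0 du v0 dv = (\<lambda>t. sqrt (N t) * exp (G' * arctan (w t)))"
    unfolding KtL_def Kt_def N_def w_def U_def V_def by (rule ext) simp
  have val: "Kd G' u0 du v0 dv t = (a/r) * E + r * (E * (G' * (c/(2 * (U t * U t+V t * V t)))))"
  proof -
    have "Kd G' u0 du v0 dv t = r * E * (a + G'*c/2) / (r * r)"
      unfolding Kd_def KtL_def Kt_def E_def w_def r_def c' rr a_def N_def U_def V_def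
      by (simp add: power2_eq_square)
    also have "\<dots> = (a/r) * E + r * (E * (G' * (c/(2 * (r * r)))))"
      using rpos by (simp add: field_simps)
    finally show ?thesis unfolding rr .
  qed
  show ?thesis unfolding fun_eq val using dK .
qed

lemma KtL_pos_N:
  assumes pos: "sqrt ((u0+t * du)^2+(v0+t * dv)^2) + (u0+t * du) > 0"
  shows "(u0+t * du)^2+(v0+t * dv)^2 > 0"
proof (rule ccontr)
  assume "\<not> ?thesis"
  then have "(u0+t * du)^2+(v0+t * dv)^2 = 0" by (smt (verit, best) zero_le_power2)
  then have "u0+t * du = 0" "(u0+t * du)^2+(v0+t * dv)^2 = 0" by (simp_all add: sum_power2_eq_zero_iff)
  then show False using pos by simp
qed

lemma Kd_deriv:
  assumes pos: "sqrt ((u0+t * du)^2+(v0+t * dv)^2) + (u0+t * du) > 0"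
  shows "(Kd G' u0 du v0 dv has_real_derivative
     KtL G' u0 du v0 dv t * ((u0 * dv - v0 * du)^2 * (1 + G'^2/4)) / ((u0+t * du)^2+(v0+t * dv)^2)^2) (at t)"
proof -
  define M where "M = (\<lambda>t. ((u0+t * du) * du + (v0+t * dv) * dv) + G'*(u0 * dv - v0 * du)/2)"
  define N where "N = (\<lambda>t. (u0+t * du)^2 + (v0+t * dv)^2)"
  have Npos: "N t > 0" unfolding N_def by (rule KtL_pos_N[OF pos])
  have fe: "Kd G' u0 du v0 dv = (\<lambda>t. KtL G' u0 du v0 dv t * M t / N t)"
    unfolding Kd_def M_def N_def by (rule ext) simp
  have dK: "(KtL G' u0 du v0 dv has_real_derivative KtL G' u0 du v0 dv t * M t / N t) (at t)"
    using KtL_deriv[OF pos] unfolding Kd_def M_def N_def by simp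
  have dM: "(M has_real_derivative du^2+dv^2) (at t)"
    unfolding M_def by (auto intro!: derivative_eq_intros simp: power2_eq_square)
  have dN: "(N has_real_derivative 2 * ((u0+t * du) * du + (v0+t * dv) * dv)) (at t)"
    unfolding N_def by (auto intro!: derivative_eq_intros simp: algebra_simps)
  have d: "((\<lambda>t. KtL G' u0 du v0 dv t * M t / N t) has_real_derivative
     ((KtL G' u0 du v0 dv t * M t / N t * M t + (du^2+dv^2) * KtL G' u0 du v0 dv t) * N t
      - KtL G' u0 du v0 dv t * M t * (2 * ((u0+t * du) * du + (v0+t * dv) * dv))) / (N t * N t)) (at t)"
    by (rule DERIV_divide[OF DERIV_mult[OF dK dM] dN]) (use Npos in auto)
  define K where "K = KtL G' u0 du v0 dv t"
  define a where "a = (u0+t * du) * du + (v0+t * dv) * dv"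
  have poly: "(M t)^2 + (du^2+dv^2) * N t - 2 * a * M t = (u0 * dv - v0 * du)^2 * (1 + G'^2/4)"
    unfolding M_def N_def a_def by (simp add: power2_eq_square field_simps)
  have "((K * M t / N t * M t + (du^2+dv^2) * K) * N t - K * M t * (2 * a)) / (N t * N t)
      = K * ((M t)^2 + (du^2+dv^2) * N t - 2 * a * M t) / (N t)^2"
    using Npos by (simp add: field_simps power2_eq_square)
  also have "\<dots> = K * ((u0 * dv - v0 * du)^2 * (1 + G'^2/4)) / (N t)^2" unfolding poly ..
  finally show ?thesis unfolding fe using d unfolding K_def a_def N_def by simp
qed


lemma glue_vd:
  fixes f1 f2 :: "real \<Rightarrow> 'a::real_normed_vector"
  assumes d1: "(f1 has_vector_derivative D) (at a)" and d2: "(f2 has_vector_derivative D) (at a)"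
    and e: "f1 a = f2 a"
  shows "((\<lambda>x. if x \<le> a then f1 x else f2 x) has_vector_derivative D) (at a)"
proof -
  let ?f = "\<lambda>x. if x \<le> a then f1 x else f2 x"
  have l: "(?f has_vector_derivative D) (at a within {..a})"
    by (rule has_vector_derivative_transform[OF _ _ has_vector_derivative_at_within[OF d1]]) auto
  have r: "(?f has_vector_derivative D) (at a within {a..})"
    by (rule has_vector_derivative_transform[OF _ _ has_vector_derivative_at_within[OF d2]]) (use e in auto)
  have U: "{..a} \<union> {a..} = (UNIV::real set)" by auto
  from l r have "(?f has_vector_derivative D) (at a within ({..a} \<union> {a..}))"
    unfolding has_vector_derivative_def has_derivative_within Lim_within_Un by auto
  then show ?thesis unfolding U by simp
qed

lemma glue_rd:
  fixes f1 f2 :: "real \<Rightarrow> real"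
  assumes d1: "(f1 has_real_derivative D) (at a)" and d2: "(f2 has_real_derivative D) (at a)"
    and e: "f1 a = f2 a"
  shows "((\<lambda>x. if x \<le> a then f1 x else f2 x) has_real_derivative D) (at a)"
  using glue_vd[of f1 D a f2] assms unfolding has_real_derivative_iff_has_vector_derivative by simp

lemma mono_from_deriv:
  fixes D :: "real \<Rightarrow> real"
  assumes "x \<le> y" "\<And>t. x \<le> t \<Longrightarrow> t \<le> y \<Longrightarrow> \<exists>z. (D has_real_derivative z) (at t) \<and> z \<ge> 0"
  shows "D x \<le> D y"
proof (rule DERIV_nonneg_imp_increasing_open[OF assms(1)])
  show "\<And>t. x < t \<Longrightarrow> t < y \<Longrightarrow> \<exists>z. (D has_real_derivative z) (at t) \<and> z \<ge> 0"
    using assms(2) by auto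
  show "continuous_on {x..y} D"
    using assms(2) by (intro continuous_at_imp_continuous_on ballI) (metis DERIV_isCont atLeastAtMost_iff)
qed

lemma conv_glue:
  fixes F Ha Hb Da Db :: "real \<Rightarrow> real"
  assumes F1: "\<And>t. t \<le> a \<Longrightarrow> F t = Ha t" and F2: "\<And>t. t \<ge> a \<Longrightarrow> F t = Hb t"
    and dH1: "\<And>t. t \<le> a \<Longrightarrow> (Ha has_real_derivative Da t) (at t)"
    and dH2: "\<And>t. t \<ge> a \<Longrightarrow> (Hb has_real_derivative Db t) (at t)"
    and dD1: "\<And>t. t \<le> a \<Longrightarrow> \<exists>z. (Da has_real_derivative z) (at t) \<and> z \<ge> 0"
    and dD2: "\<And>t. t \<ge> a \<Longrightarrow> \<exists>z. (Db has_real_derivative z) (at t) \<and> z \<ge> 0"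
    and eq: "Da a = Db a"
  shows "convex_on UNIV F"
proof -
  define D where "D = (\<lambda>t. if t \<le> a then Da t else Db t)"
  have Fe: "F = (\<lambda>t. if t \<le> a then Ha t else Hb t)"
    using F1 F2 by (intro ext) auto
  have dF: "(F has_real_derivative D t) (at t)" for t
  proof (cases t a rule: linorder_cases)
    case less
    have "(F has_real_derivative Da t) (at t)"
      by (rule has_field_derivative_transform_within_open[OF dH1[of t], where S="{..<a}"])
         (use less in \<open>auto simp: Fe\<close>)
    then show ?thesis using less by (simp add: D_def)
  next
    case greater
    have "(F has_real_derivative Db t) (at t)"
      by (rule has_field_derivative_transform_within_open[OF dH2[of t], where S="{a<..}"])
         (use greater in \<open>auto simp: Fe\<close>)
    then show ?thesis using greater by (simp add: D_def)
  next
    case equal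
    have "Ha a = Hb a" using F1 F2 by (metis order_refl)
    then show ?thesis unfolding Fe D_def using equal glue_rd[OF dH1[of a] _, of Hb] dH2[of a] eq by simp
  qed
  show ?thesis
  proof (rule convex_on_realI[where f'=D])
    show "connected (UNIV::real set)" by simp
    show "\<And>x. x \<in> UNIV \<Longrightarrow> (F has_real_derivative D x) (at x)" using dF by simp
    fix x y :: real assume xy: "x \<le> y"
    show "D x \<le> D y"
    proof (cases "y \<le> a")
      case True
      then show ?thesis unfolding D_def using xy mono_from_deriv[OF xy, of Da] dD1 by auto
    next
      case False
      note F = this
      show ?thesis
      proof (cases "x \<le> a")
        case True
        have "Da x \<le> Da a" using mono_from_deriv[OF True, of Da] dD1 by auto
        moreover have "Db a \<le> Db y" using mono_from_deriv[of a y Db] dD2 F by auto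
        ultimately show ?thesis unfolding D_def using True F eq by auto
      next
        case False
        then show ?thesis unfolding D_def using F mono_from_deriv[OF xy, of Db] dD2 by auto
      qed
    qed
  qed
qed

lemma conv_whole:
  fixes F D :: "real \<Rightarrow> real"
  assumes "\<And>t. (F has_real_derivative D t) (at t)"
    and "\<And>t. \<exists>z. (D has_real_derivative z) (at t) \<and> z \<ge> 0"
  shows "convex_on UNIV F"
  by (rule convex_on_realI[where f'=D]) (use assms mono_from_deriv in auto)

lemma conv_max_affine:
  fixes a b c d :: real
  shows "convex_on UNIV (\<lambda>t. max (a*t+b) (c*t+d))"
proof (rule convex_onI)
  fix t x y :: real assume t: "0 < t" "t < 1"
  have "a*((1-t)*x+t*y)+b = (1-t)*(a*x+b) + t*(a*y+b)" by (simp add: algebra_simps)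
  also have "\<dots> \<le> (1-t)*max (a*x+b) (c*x+d) + t*max (a*y+b) (c*y+d)"
    using t by (intro add_mono mult_left_mono) auto
  finally have 1: "a*((1-t)*x+t*y)+b \<le> (1-t)*max (a*x+b) (c*x+d) + t*max (a*y+b) (c*y+d)" .
  have "c*((1-t)*x+t*y)+d = (1-t)*(c*x+d) + t*(c*y+d)" by (simp add: algebra_simps)
  also have "\<dots> \<le> (1-t)*max (a*x+b) (c*x+d) + t*max (a*y+b) (c*y+d)"
    using t by (intro add_mono mult_left_mono) auto
  finally have 2: "c*((1-t)*x+t*y)+d \<le> (1-t)*max (a*x+b) (c*x+d) + t*max (a*y+b) (c*y+d)" .
  show "max (a*((1-t)*\<^sub>R x+t*\<^sub>R y)+b) (c*((1-t)*\<^sub>R x+t*\<^sub>R y)+d)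
      \<le> (1-t)*max (a*x+b) (c*x+d) + t*max (a*y+b) (c*y+d)"
    using 1 2 by simp
qed simp


lemma Kt00: "Kt G' 0 0 = 0" unfolding Kt_def by simp

lemma Kt_nonneg: "Kt G' u v \<ge> 0" unfolding Kt_def by simp

lemma KtL_nonneg: "KtL G' u0 du v0 dv t \<ge> 0" unfolding KtL_def by (rule Kt_nonneg)

lemma Kt_hom:
  assumes c: "c > 0"
  shows "Kt G' (c * u) (c * v) = c * Kt G' u v"
proof -
  have s: "sqrt ((c * u)^2 + (c * v)^2) = c * sqrt (u^2+v^2)"
    using c by (simp add: power_mult_distrib real_sqrt_mult flip: distrib_left)
  have "c * v / (c * sqrt (u^2+v^2) + c * u) = v / (sqrt (u^2+v^2) + u)"
    using c by (simp add: flip: distrib_left)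
  then show ?thesis unfolding Kt_def s by simp
qed

lemma Kd_axis:
  assumes "u0 + t * du = 0"
  shows "Kd G' u0 du v0 dv t = KtL G' u0 du v0 dv t * ((v0+t * dv) * dv - G'*(v0+t * dv) * du/2) / (v0+t * dv)^2"
proof -
  have u0: "u0 = - t * du" using assms by simp
  have c: "u0 * dv - v0 * du = -((v0+t * dv) * du)" using u0 by (simp add: algebra_simps)
  show ?thesis unfolding Kd_def c assms by (simp add: field_simps)
qed

lemma pos_cond:
  fixes u v :: real
  assumes "u \<ge> 0" "u \<noteq> 0 \<or> v \<noteq> 0"
  shows "sqrt (u^2+v^2) + u > 0"
proof (cases "u = 0")
  case True
  then show ?thesis using assms by simp
next
  case False
  then show ?thesis using assms by (simp add: add_nonneg_pos)
qed

context fins begin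

lemma K_eq_all: "finsleroidK g R = Kt G (h * fq R) (fA g R)"
proof (cases "R = (0,0)")
  case True
  then show ?thesis unfolding finsleroidK_def fq_def fA_def fZ_def by (simp add: Kt00)
next
  case False
  then show ?thesis by (rule K_eq)
qed

lemma K_nonneg: "finsleroidK g R \<ge> 0"
  unfolding K_eq_all by (rule Kt_nonneg)

lemma K_hom:
  assumes "c \<ge> 0"
  shows "finsleroidK g (c *\<^sub>R R) = c * finsleroidK g R"
proof (cases "c = 0")
  case True
  then show ?thesis unfolding finsleroidK_def by (simp add: zero_prod_def)
next
  case False
  then have c: "c > 0" using assms by simp
  have q: "h * fq (c *\<^sub>R R) = c * (h * fq R)" using c unfolding fq_def by (simp add: abs_mult)
  have A: "fA g (c *\<^sub>R R) = c * fA g R" using c unfolding fA_def fq_def fZ_def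
    by (simp add: abs_mult algebra_simps)
  show ?thesis unfolding K_eq_all q A using Kt_hom[OF c] by simp
qed

lemma K_lineR:
  assumes "fst P + t * fst V \<ge> 0"
  shows "finsleroidK g (P + t *\<^sub>R V) =
    KtL G (h * fst P) (h * fst V) (snd P + g * fst P/2) (snd V + g * fst V/2) t"
proof -
  have q: "h * fq (P + t *\<^sub>R V) = h * fst P + t * (h * fst V)"
    using assms unfolding fq_def by (simp add: algebra_simps)
  have A: "fA g (P + t *\<^sub>R V) = (snd P + g * fst P/2) + t * (snd V + g * fst V/2)"
    using assms unfolding fA_def fq_def fZ_def by (simp add: field_simps)
  show ?thesis unfolding K_eq_all q A KtL_def ..
qed

lemma K_lineL:
  assumes "fst P + t * fst V \<le> 0"
  shows "finsleroidK g (P + t *\<^sub>R V) =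
    KtL G (-h * fst P) (-h * fst V) (snd P - g * fst P/2) (snd V - g * fst V/2) t"
proof -
  have q: "h * fq (P + t *\<^sub>R V) = -h * fst P + t * (-h * fst V)"
    using assms unfolding fq_def by (simp add: algebra_simps)
  have A: "fA g (P + t *\<^sub>R V) = (snd P - g * fst P/2) + t * (snd V - g * fst V/2)"
    using assms unfolding fA_def fq_def fZ_def by (simp add: field_simps)
  show ?thesis unfolding K_eq_all q A KtL_def ..
qed

lemma posR:
  assumes "fst P + t * fst V \<ge> 0" "P + t *\<^sub>R V \<noteq> 0"
  shows "sqrt ((h * fst P + t * (h * fst V))^2 + ((snd P + g * fst P/2) + t * (snd V + g * fst V/2))^2)
          + (h * fst P + t * (h * fst V)) > 0"
proof (rule pos_cond)
  have "h * fst P + t * (h * fst V) = h * (fst P + t * fst V)" by (simp add: algebra_simps)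
  then show "0 \<le> h * fst P + t * (h * fst V)" using assms(1) h_pos by simp
  show "h * fst P + t * (h * fst V) \<noteq> 0 \<or> (snd P + g * fst P/2) + t * (snd V + g * fst V/2) \<noteq> 0"
  proof (rule ccontr)
    assume "\<not> ?thesis"
    then have a: "h * (fst P + t * fst V) = 0" "(snd P + t * snd V) + g * (fst P + t * fst V)/2 = 0"
      by (simp_all add: field_simps)
    then have "fst P + t * fst V = 0" using h_pos by simp
    then have "snd P + t * snd V = 0" using a(2) by simp
    then have "P + t *\<^sub>R V = 0" using \<open>fst P + t * fst V = 0\<close> by (simp add: prod_eq_iff)
    then show False using assms(2) by simp
  qed
qed

lemma posL:
  assumes "fst P + t * fst V \<le> 0" "P + t *\<^sub>R V \<noteq> 0"
  shows "sqrt ((-h * fst P + t * (-h * fst V))^2 + ((snd P - g * fst P/2) + t * (snd V - g * fst V/2))^2)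
          + (-h * fst P + t * (-h * fst V)) > 0"
proof (rule pos_cond)
  have "0 \<le> h * (- (fst P + t * fst V))" using assms(1) h_pos by simp
  then show "0 \<le> -h * fst P + t * (-h * fst V)" by (simp add: algebra_simps)
  show "-h * fst P + t * (-h * fst V) \<noteq> 0 \<or> (snd P - g * fst P/2) + t * (snd V - g * fst V/2) \<noteq> 0"
  proof (rule ccontr)
    assume "\<not> ?thesis"
    then have a: "h * (fst P + t * fst V) = 0" "(snd P + t * snd V) - g * (fst P + t * fst V)/2 = 0"
      by (simp_all add: field_simps)
    then have "fst P + t * fst V = 0" using h_pos by simp
    then have "snd P + t * snd V = 0" using a(2) by simp
    then have "P + t *\<^sub>R V = 0" using \<open>fst P + t * fst V = 0\<close> by (simp add: prod_eq_iff)
    then show False using assms(2) by simp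
  qed
qed

lemma Kd_match:
  assumes "p1 + t0 * v1 = 0"
  shows "Kd G (h * p1) (h * v1) (p2+g * p1/2) (v2+g * v1/2) t0 = Kd G (-h * p1) (-h * v1) (p2-g * p1/2) (v2-g * v1/2) t0"
proof -
  have "h * p1 + t0 * (h * v1) = h * (p1 + t0 * v1)" by (simp add: algebra_simps)
  then have e1: "h * p1 + t0 * (h * v1) = 0" using assms by simp
  have e2: "-h * p1 + t0 * (-h * v1) = 0" using e1 by simp
  have "(p2+g * p1/2) + t0 * (v2+g * v1/2) = p2 + t0 * v2 + g * (p1+t0 * v1)/2" by (simp add: field_simps)
  then have e3: "(p2+g * p1/2) + t0 * (v2+g * v1/2) = p2 + t0 * v2" using assms by simp
  have e4: "(p2-g * p1/2) + t0 * (v2-g * v1/2) = p2 + t0 * v2" using e3 by (simp add: algebra_simps)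
  have gv: "g * v1 = G * (h * v1)" using arg_cong[OF g_eq, of "\<lambda>x. x * v1"] by (simp add: mult.assoc)
  have n1: "(p2 + t0 * v2) * (v2+g * v1/2) - G * (p2 + t0 * v2) * (h * v1)/2 = (p2 + t0 * v2) * v2"
    unfolding gv by (simp add: algebra_simps)
  have n2: "(p2 + t0 * v2) * (v2-g * v1/2) - G * (p2 + t0 * v2) * (-h * v1)/2 = (p2 + t0 * v2) * v2"
    unfolding gv by (simp add: field_simps)
  show ?thesis
    unfolding Kd_axis[OF e1] Kd_axis[OF e2] unfolding KtL_def e1 e2 e3 e4 n1 n2 ..
qed

lemma D_nonneg:
  assumes "sqrt ((u0+t * du)^2+(v0+t * dv)^2) + (u0+t * du) > 0"
  shows "\<exists>z. (Kd G u0 du v0 dv has_real_derivative z) (at t) \<and> z \<ge> 0"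
proof (rule exI, rule conjI)
  show "(Kd G u0 du v0 dv has_real_derivative
     KtL G u0 du v0 dv t * ((u0 * dv - v0 * du)^2 * (1 + G^2/4)) / ((u0+t * du)^2+(v0+t * dv)^2)^2) (at t)"
    by (rule Kd_deriv[OF assms])
  have a: "KtL G u0 du v0 dv t \<ge> 0" by (rule KtL_nonneg)
  have b: "(u0 * dv - v0 * du)^2 * (1 + G^2/4) \<ge> 0" by (intro mult_nonneg_nonneg) auto
  show "KtL G u0 du v0 dv t * ((u0 * dv - v0 * du)^2 * (1 + G^2/4)) / ((u0+t * du)^2+(v0+t * dv)^2)^2 \<ge> 0"
    by (intro divide_nonneg_nonneg mult_nonneg_nonneg a b) simp
qed

lemma K_line_convex: "convex_on UNIV (\<lambda>t. finsleroidK g (P + t *\<^sub>R V))"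
proof (cases "\<exists>t0. P + t0 *\<^sub>R V = 0")
  case True
  then obtain t0 where t0: "P + t0 *\<^sub>R V = 0" by blast
  have Pe: "P = - t0 *\<^sub>R V" using t0 by (simp add: eq_neg_iff_add_eq_0)
  have "(\<lambda>t. finsleroidK g (P + t *\<^sub>R V)) =
     (\<lambda>t. max (finsleroidK g V * t + (- t0 * finsleroidK g V)) ((- finsleroidK g (-V)) * t + t0 * finsleroidK g (-V)))"
  proof (rule ext)
    fix t
    show "finsleroidK g (P + t *\<^sub>R V) = max (finsleroidK g V * t + (- t0 * finsleroidK g V)) ((- finsleroidK g (-V)) * t + t0 * finsleroidK g (-V))"
    proof (cases "t \<ge> t0")
      case True
      have e: "P + t *\<^sub>R V = (t - t0) *\<^sub>R V" unfolding Pe by (simp add: algebra_simps)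
      have "finsleroidK g (P + t *\<^sub>R V) = (t - t0) * finsleroidK g V" unfolding e by (rule K_hom) (use True in simp)
      moreover have "(- finsleroidK g (-V)) * t + t0 * finsleroidK g (-V) \<le> 0"
        using True K_nonneg[of "-V"] mult_right_mono[OF True, of "finsleroidK g (-V)"] by (simp add: algebra_simps)
      moreover have "(t - t0) * finsleroidK g V \<ge> 0" using True K_nonneg by simp
      ultimately show ?thesis by (simp add: algebra_simps)
    next
      case False
      have e: "P + t *\<^sub>R V = (t0 - t) *\<^sub>R (-V)" unfolding Pe by (simp add: algebra_simps)
      have "finsleroidK g (P + t *\<^sub>R V) = (t0 - t) * finsleroidK g (-V)" unfolding e by (rule K_hom) (use False in simp)
      moreover have "finsleroidK g V * t + (- t0 * finsleroidK g V) \<le> 0"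
        using False K_nonneg[of "V"] mult_right_mono[of t t0 "finsleroidK g V"] by (simp add: algebra_simps)
      moreover have "(t0 - t) * finsleroidK g (-V) \<ge> 0" using False K_nonneg by simp
      ultimately show ?thesis by (simp add: algebra_simps)
    qed
  qed
  then show ?thesis using conv_max_affine by metis
next
  case False
  then have nz: "\<And>t. P + t *\<^sub>R V \<noteq> 0" by blast
  define HR where "HR = KtL G (h * fst P) (h * fst V) (snd P + g * fst P/2) (snd V + g * fst V/2)"
  define DR where "DR = Kd G (h * fst P) (h * fst V) (snd P + g * fst P/2) (snd V + g * fst V/2)"
  define HL where "HL = KtL G (-h * fst P) (-h * fst V) (snd P - g * fst P/2) (snd V - g * fst V/2)"
  define DL where "DL = Kd G (-h * fst P) (-h * fst V) (snd P - g * fst P/2) (snd V - g * fst V/2)"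
  have RK: "fst P + t * fst V \<ge> 0 \<Longrightarrow> finsleroidK g (P + t *\<^sub>R V) = HR t" for t
    using K_lineR[of P t V] unfolding HR_def by simp
  have RD: "fst P + t * fst V \<ge> 0 \<Longrightarrow> (HR has_real_derivative DR t) (at t)" for t
    unfolding HR_def DR_def by (rule KtL_deriv[OF posR[OF _ nz]])
  have RDD: "fst P + t * fst V \<ge> 0 \<Longrightarrow> (\<exists>z. (DR has_real_derivative z) (at t) \<and> z \<ge> 0)" for t
    unfolding DR_def by (rule D_nonneg[OF posR[OF _ nz]])
  have LK: "fst P + t * fst V \<le> 0 \<Longrightarrow> finsleroidK g (P + t *\<^sub>R V) = HL t" for t
    using K_lineL[of P t V] unfolding HL_def by simp
  have LD: "fst P + t * fst V \<le> 0 \<Longrightarrow> (HL has_real_derivative DL t) (at t)" for t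
    unfolding HL_def DL_def by (rule KtL_deriv[OF posL[OF _ nz]])
  have LDD: "fst P + t * fst V \<le> 0 \<Longrightarrow> (\<exists>z. (DL has_real_derivative z) (at t) \<and> z \<ge> 0)" for t
    unfolding DL_def by (rule D_nonneg[OF posL[OF _ nz]])
  show ?thesis
  proof (cases "fst V = 0")
    case True
    show ?thesis
    proof (cases "fst P \<ge> 0")
      case True
      then have c: "fst P + t * fst V \<ge> 0" for t using \<open>fst V = 0\<close> by simp
      have e: "(\<lambda>t. finsleroidK g (P + t *\<^sub>R V)) = HR" by (rule ext) (rule RK[OF c])
      show ?thesis unfolding e by (rule conv_whole[where D=DR]) (rule RD[OF c], rule RDD[OF c])
    next
      case False
      then have c: "fst P + t * fst V \<le> 0" for t using \<open>fst V = 0\<close> by simp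
      have e: "(\<lambda>t. finsleroidK g (P + t *\<^sub>R V)) = HL" by (rule ext) (rule LK[OF c])
      show ?thesis unfolding e by (rule conv_whole[where D=DL]) (rule LD[OF c], rule LDD[OF c])
    qed
  next
    case False
    define t0 where "t0 = - fst P / fst V"
    have t0e: "fst P + t0 * fst V = 0" using False unfolding t0_def by simp
    show ?thesis
    proof (cases "fst V > 0")
      case True
      have le: "t \<le> t0 \<Longrightarrow> fst P + t * fst V \<le> 0" for t
        using t0e True mult_right_mono[of t t0 "fst V"] by linarith
      have ge: "t \<ge> t0 \<Longrightarrow> fst P + t * fst V \<ge> 0" for t
        using t0e True mult_right_mono[of t0 t "fst V"] by linarith
      show ?thesis
      proof (rule conv_glue[where a=t0 and Ha=HL and Hb=HR and Da=DL and Db=DR])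
        fix t assume t: "t \<le> t0"
        show "finsleroidK g (P + t *\<^sub>R V) = HL t" by (rule LK[OF le[OF t]])
        show "(HL has_real_derivative DL t) (at t)" by (rule LD[OF le[OF t]])
        show "\<exists>z. (DL has_real_derivative z) (at t) \<and> z \<ge> 0" by (rule LDD[OF le[OF t]])
      next
        fix t assume t: "t \<ge> t0"
        show "finsleroidK g (P + t *\<^sub>R V) = HR t" by (rule RK[OF ge[OF t]])
        show "(HR has_real_derivative DR t) (at t)" by (rule RD[OF ge[OF t]])
        show "\<exists>z. (DR has_real_derivative z) (at t) \<and> z \<ge> 0" by (rule RDD[OF ge[OF t]])
      next
        show "DL t0 = DR t0" unfolding DL_def DR_def using Kd_match[OF t0e] by simp
      qed
    next
      case False
      then have Vn: "fst V < 0" using \<open>fst V \<noteq> 0\<close> by simp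
      have le: "t \<le> t0 \<Longrightarrow> fst P + t * fst V \<ge> 0" for t
        using t0e Vn mult_right_mono_neg[of t t0 "fst V"] by linarith
      have ge: "t \<ge> t0 \<Longrightarrow> fst P + t * fst V \<le> 0" for t
        using t0e Vn mult_right_mono_neg[of t0 t "fst V"] by linarith
      show ?thesis
      proof (rule conv_glue[where a=t0 and Ha=HR and Hb=HL and Da=DR and Db=DL])
        fix t assume t: "t \<le> t0"
        show "finsleroidK g (P + t *\<^sub>R V) = HR t" by (rule RK[OF le[OF t]])
        show "(HR has_real_derivative DR t) (at t)" by (rule RD[OF le[OF t]])
        show "\<exists>z. (DR has_real_derivative z) (at t) \<and> z \<ge> 0" by (rule RDD[OF le[OF t]])
      next
        fix t assume t: "t \<ge> t0"
        show "finsleroidK g (P + t *\<^sub>R V) = HL t" by (rule LK[OF ge[OF t]])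
        show "(HL has_real_derivative DL t) (at t)" by (rule LD[OF ge[OF t]])
        show "\<exists>z. (DL has_real_derivative z) (at t) \<and> z \<ge> 0" by (rule LDD[OF ge[OF t]])
      next
        show "DR t0 = DL t0" unfolding DL_def DR_def using Kd_match[OF t0e] by simp
      qed
    qed
  qed
qed

lemma convex_S: "convex {R. finsleroidK g R \<le> 1}"
proof (rule convexI)
  fix x y :: "real \<times> real" and u v :: real
  assume x: "x \<in> {R. finsleroidK g R \<le> 1}" and y: "y \<in> {R. finsleroidK g R \<le> 1}"
    and uv: "0 \<le> u" "0 \<le> v" "u + v = 1"
  have u: "u = 1 - v" using uv by simp
  have e: "u *\<^sub>R x + v *\<^sub>R y = x + ((1 - v) * 0 + v * 1) *\<^sub>R (y - x)"
    unfolding u by (simp add: algebra_simps)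
  have "finsleroidK g (x + ((1 - v) * 0 + v * 1) *\<^sub>R (y - x))
     \<le> (1 - v) * finsleroidK g (x + 0 *\<^sub>R (y - x)) + v * finsleroidK g (x + 1 *\<^sub>R (y - x))"
    using convex_onD[OF K_line_convex[of x "y - x"], of v 0 1] uv by simp
  also have "\<dots> = (1 - v) * finsleroidK g x + v * finsleroidK g y" by simp
  also have "\<dots> \<le> (1 - v) * 1 + v * 1"
    using x y uv by (intro add_mono mult_left_mono) auto
  finally show "u *\<^sub>R x + v *\<^sub>R y \<in> {R. finsleroidK g R \<le> 1}" unfolding e by simp
qed

end

definition mir :: "real \<times> real \<Rightarrow> real \<times> real" where "mir p = (- fst p, snd p)"

lemma bl_mir: "bounded_linear mir"
  unfolding mir_def
  by (intro bounded_linear_Pair bounded_linear_minus bounded_linear_fst bounded_linear_snd)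

lemma mir_scale: "mir (c *\<^sub>R p) = c *\<^sub>R mir p" unfolding mir_def by simp

lemma mir_neg: "mir (- p) = - mir p" unfolding mir_def by simp

lemma mir_deriv:
  assumes "(F has_vector_derivative D) (at x)"
  shows "((\<lambda>x. c *\<^sub>R mir (F x)) has_vector_derivative c *\<^sub>R mir D) (at x)"
proof -
  have bl: "bounded_linear (\<lambda>p. c *\<^sub>R mir p)"
    by (rule bounded_linear_compose[OF bounded_linear_scaleR_right bl_mir])
  show ?thesis using bounded_linear.has_vector_derivative[OF bl assms] .
qed

lemma shift_deriv:
  fixes F :: "real \<Rightarrow> 'a::real_normed_vector"
  assumes "(F has_vector_derivative D) (at (a + b*x))"
  shows "((\<lambda>x. F (a + b*x)) has_vector_derivative b *\<^sub>R D) (at x)"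
proof -
  have "((\<lambda>x. a + b*x) has_vector_derivative b) (at x)"
    using has_vector_derivative_add[OF has_vector_derivative_const has_vector_derivative_mult_right[OF has_vector_derivative_id]]
    by simp
  from vector_diff_chain_at[OF this assms] show ?thesis by (simp add: o_def)
qed

definition pext :: "real \<Rightarrow> real \<Rightarrow> real \<Rightarrow> (real \<Rightarrow> real \<times> real) \<Rightarrow> real \<Rightarrow> real \<times> real" where
  "pext s1 L e f x = (if x \<le> 0 then e *\<^sub>R mir (f (s1 - x))
      else if x \<le> L/2 then f (s1 + x) else e *\<^sub>R mir (f (s1 + L - x)))"

lemma pext_deriv:
  assumes L: "L > 0"
    and df: "\<And>s. s1 \<le> s \<Longrightarrow> s \<le> s1 + L/2 \<Longrightarrow> (f has_vector_derivative f' s) (at s)"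
    and j1: "e *\<^sub>R mir (f s1) = f s1" and j2: "e *\<^sub>R mir (f (s1 + L/2)) = f (s1 + L/2)"
    and j3: "(-e) *\<^sub>R mir (f' s1) = f' s1" and j4: "(-e) *\<^sub>R mir (f' (s1 + L/2)) = f' (s1 + L/2)"
    and x: "-L/2 < x" "x < L"
  shows "(pext s1 L e f has_vector_derivative pext s1 L (-e) f' x) (at x)"
proof -
  define A where "A = (\<lambda>x. e *\<^sub>R mir (f (s1 - x)))"
  define M where "M = (\<lambda>x. f (s1 + x))"
  define B where "B = (\<lambda>x. e *\<^sub>R mir (f (s1 + L - x)))"
  define I where "I = (\<lambda>x. if x \<le> L/2 then M x else B x)"
  have pe: "pext s1 L e f = (\<lambda>x. if x \<le> 0 then A x else I x)"
    unfolding pext_def A_def M_def B_def I_def by (rule ext) simp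
  have dA: "-L/2 \<le> y \<Longrightarrow> y \<le> 0 \<Longrightarrow> (A has_vector_derivative (-e) *\<^sub>R mir (f' (s1 - y))) (at y)" for y
  proof -
    assume y: "-L/2 \<le> y" "y \<le> 0"
    have "((\<lambda>y. f (s1 + (-1) * y)) has_vector_derivative (-1) *\<^sub>R f' (s1 - y)) (at y)"
      by (rule shift_deriv) (use df y in simp)
    from mir_deriv[OF this, of e] show ?thesis unfolding A_def by (simp add: mir_scale mir_neg)
  qed
  have dM: "0 \<le> y \<Longrightarrow> y \<le> L/2 \<Longrightarrow> (M has_vector_derivative f' (s1 + y)) (at y)" for y
  proof -
    assume y: "0 \<le> y" "y \<le> L/2"
    have "((\<lambda>y. f (s1 + 1 * y)) has_vector_derivative 1 *\<^sub>R f' (s1 + y)) (at y)"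
      by (rule shift_deriv) (use df y in simp)
    then show ?thesis unfolding M_def by simp
  qed
  have dB: "L/2 \<le> y \<Longrightarrow> y \<le> L \<Longrightarrow> (B has_vector_derivative (-e) *\<^sub>R mir (f' (s1 + L - y))) (at y)" for y
  proof -
    assume y: "L/2 \<le> y" "y \<le> L"
    have "((\<lambda>y. f ((s1 + L) + (-1) * y)) has_vector_derivative (-1) *\<^sub>R f' (s1 + L - y)) (at y)"
      by (rule shift_deriv) (use df y in simp)
    from mir_deriv[OF this, of e] show ?thesis unfolding B_def by (simp add: mir_scale mir_neg)
  qed
  have dI: "0 < y \<Longrightarrow> y < L \<Longrightarrow> (I has_vector_derivative pext s1 L (-e) f' y) (at y)" for y
  proof -
    assume y: "0 < y" "y < L"
    consider "y < L/2" | "y = L/2" | "y > L/2" by linarith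
    then show ?thesis
    proof cases
      case 1
      have "(I has_vector_derivative f' (s1 + y)) (at y)"
        by (rule has_vector_derivative_transform_within_open[OF dM[of y], where S="{..<L/2}"])
           (use y 1 in \<open>auto simp: I_def\<close>)
      then show ?thesis using y 1 by (simp add: pext_def)
    next
      case 2
      have ee: "s1 + L - L/2 = s1 + L/2" by simp
      have dM2: "(M has_vector_derivative f' (s1 + L/2)) (at (L/2))" using dM[of "L/2"] L by simp
      have dB2: "(B has_vector_derivative f' (s1 + L/2)) (at (L/2))"
        using dB[of "L/2"] L unfolding ee j4 by simp
      have v: "M (L/2) = B (L/2)" unfolding M_def B_def ee j2 ..
      have "(I has_vector_derivative f' (s1 + L/2)) (at (L/2))"
        unfolding I_def by (rule glue_vd[OF dM2 dB2 v])
      then show ?thesis unfolding 2 using L by (simp add: pext_def)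
    next
      case 3
      have "(I has_vector_derivative (-e) *\<^sub>R mir (f' (s1 + L - y))) (at y)"
        by (rule has_vector_derivative_transform_within_open[OF dB[of y], where S="{L/2<..}"])
           (use y 3 in \<open>auto simp: I_def\<close>)
      then show ?thesis using y 3 by (simp add: pext_def)
    qed
  qed
  consider "x < 0" | "x = 0" | "x > 0" by linarith
  then show ?thesis
  proof cases
    case 1
    have "((\<lambda>x. if x \<le> 0 then A x else I x) has_vector_derivative (-e) *\<^sub>R mir (f' (s1 - x))) (at x)"
      by (rule has_vector_derivative_transform_within_open[OF dA[of x], where S="{..<0}"])
         (use x 1 in auto)
    then show ?thesis unfolding pe using 1 by (simp add: pext_def)
  next
    case 2
    have dM0: "(M has_vector_derivative f' s1) (at 0)" using dM[of 0] L by simp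
    have dI0: "(I has_vector_derivative f' s1) (at 0)"
      by (rule has_vector_derivative_transform_within_open[OF dM0, where S="{..<L/2}"])
         (use L in \<open>auto simp: I_def\<close>)
    have "((\<lambda>x. if x \<le> 0 then A x else I x) has_vector_derivative f' s1) (at 0)"
      by (rule glue_vd[OF _ dI0]) (use dA[of 0] j3 j1 L in \<open>auto simp: A_def I_def M_def\<close>)
    then show ?thesis unfolding pe using 2 j3 by (simp add: pext_def)
  next
    case 3
    show ?thesis unfolding pe
      by (rule has_vector_derivative_transform_within_open[OF dI[of x], where S="{0<..}"])
         (use x 3 in \<open>auto\<close>)
  qed
qed

definition pfold :: "real \<Rightarrow> (real \<Rightarrow> 'a) \<Rightarrow> real \<Rightarrow> 'a" where
  "pfold L F t = F (t - L * of_int \<lfloor>t / L\<rfloor>)"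

lemma pfold_shift:
  assumes L: "L > 0"
  shows "pfold L F (t + of_int k * L) = pfold L F t"
proof -
  have "(t + of_int k * L) / L = t / L + of_int k" using L by (simp add: field_simps)
  then have "\<lfloor>(t + of_int k * L) / L\<rfloor> = \<lfloor>t / L\<rfloor> + k" by simp
  then show ?thesis unfolding pfold_def by (simp add: algebra_simps)
qed

lemma pfold_per:
  assumes L: "L > 0"
  shows "pfold L F (t + L) = pfold L F t"
  using pfold_shift[OF L, of F t 1] by simp

lemma pfold_small:
  assumes "0 \<le> x" "x < L"
  shows "pfold L F x = F x"
proof -
  have "\<lfloor>x / L\<rfloor> = 0" using assms by (simp add: floor_eq_iff)
  then show ?thesis unfolding pfold_def by simp
qed

lemma pfold_neg:
  assumes "-L \<le> x" "x < 0"
  shows "pfold L F x = F (x + L)"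
proof -
  have L: "L > 0" using assms by simp
  have "\<lfloor>x / L\<rfloor> = -1" using assms L by (simp add: floor_eq_iff field_simps)
  then show ?thesis unfolding pfold_def by simp
qed

lemma pfold_pext:
  assumes "-L/2 < x" "x < L"
  shows "pfold L (pext s1 L e f) x = pext s1 L e f x"
proof (cases "x \<ge> 0")
  case True
  then show ?thesis using assms pfold_small by blast
next
  case False
  then have "pfold L (pext s1 L e f) x = pext s1 L e f (x + L)" using assms by (intro pfold_neg) auto
  also have "\<dots> = pext s1 L e f x" using assms False unfolding pext_def by auto
  finally show ?thesis .
qed

lemma pfold_repr:
  assumes L: "L > 0"
  obtains x where "-L/2 < x" "x < L" "\<And>F. pfold L F t = pfold L F x"
proof -
  define k where "k = \<lfloor>(t + L/4) / L\<rfloor>"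
  define x where "x = t - of_int k * L"
  have k1: "of_int k \<le> (t + L/4) / L" unfolding k_def by simp
  have k2: "(t + L/4) / L < of_int k + 1" unfolding k_def by linarith
  have "of_int k * L \<le> t + L/4" using k1 L by (simp add: pos_le_divide_eq)
  moreover have "t + L/4 < (of_int k + 1) * L" using k2 L by (simp add: pos_divide_less_eq)
  ultimately have "-L/2 < x" "x < L" unfolding x_def using L by (simp_all add: algebra_simps)
  moreover have "pfold L F t = pfold L F x" for F
    using pfold_shift[OF L, of F x k] unfolding x_def by simp
  ultimately show ?thesis using that by blast
qed

lemma pfold_deriv:
  assumes L: "L > 0"
    and d: "\<And>x. -L/2 < x \<Longrightarrow> x < L \<Longrightarrow> (F has_vector_derivative F1 x) (at x)"
    and e1: "\<And>x. -L/2 < x \<Longrightarrow> x < L \<Longrightarrow> pfold L F x = F x"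
    and e2: "\<And>x. -L/2 < x \<Longrightarrow> x < L \<Longrightarrow> pfold L F1 x = F1 x"
  shows "(pfold L F has_vector_derivative pfold L F1 t) (at t)"
proof -
  define k where "k = \<lfloor>(t + L/4) / L\<rfloor>"
  define x where "x = t - of_int k * L"
  have k1: "of_int k \<le> (t + L/4) / L" unfolding k_def by simp
  have k2: "(t + L/4) / L < of_int k + 1" unfolding k_def by linarith
  have "of_int k * L \<le> t + L/4" using k1 L by (simp add: pos_le_divide_eq)
  moreover have "t + L/4 < (of_int k + 1) * L" using k2 L by (simp add: pos_divide_less_eq)
  ultimately have x: "-L/2 < x" "x < L" unfolding x_def using L by (simp_all add: algebra_simps)
  have dx: "(pfold L F has_vector_derivative F1 x) (at x)"
    by (rule has_vector_derivative_transform_within_open[OF d[OF x], where S="{-L/2<..<L}"])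
       (use x e1 in auto)
  have sh: "pfold L F y = pfold L F (- (of_int k * L) + 1 * y)" for y
    using pfold_shift[OF L, of F "y - of_int k * L" k] by simp
  have "((\<lambda>y. pfold L F (- (of_int k * L) + 1 * y)) has_vector_derivative 1 *\<^sub>R F1 x) (at t)"
    by (rule shift_deriv) (use dx in \<open>simp add: x_def\<close>)
  then have "(pfold L F has_vector_derivative F1 x) (at t)" using sh by simp
  moreover have "pfold L F1 t = F1 x"
    using pfold_shift[OF L, of F1 x k] e2[OF x] unfolding x_def by simp
  ultimately show ?thesis by simp
qed


definition sig :: "real \<Rightarrow> real \<Rightarrow> real" where
  "sig G' th = (if G' = 0 then th else (1 - exp (- G' * th)) / G')"
definition tau :: "real \<Rightarrow> real \<Rightarrow> real" where
  "tau G' s = (if G' = 0 then s else - ln (1 - G' * s) / G')"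

lemma sig_exp: "1 - G' * sig G' th = exp (- G' * th)"
  unfolding sig_def by simp

lemma tau_sig: "tau G' (sig G' th) = th"
  unfolding tau_def using sig_exp[of G' th] by (simp add: sig_def)

lemma sig_tau:
  assumes "1 - G' * s > 0"
  shows "sig G' (tau G' s) = s"
proof (cases "G' = 0")
  case True then show ?thesis unfolding sig_def tau_def by simp
next
  case False
  have "exp (- G' * tau G' s) = 1 - G' * s"
    unfolding tau_def using False assms by simp
  then show ?thesis unfolding sig_def using False by (simp add: field_simps)
qed

lemma tau_exp:
  assumes "1 - G' * s > 0"
  shows "exp (- G' * tau G' s) = 1 - G' * s"
  using sig_exp[of G' "tau G' s"] sig_tau[OF assms] by simp

lemma sig_deriv: "(sig G' has_real_derivative exp (- G' * th)) (at th)"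
proof (cases "G' = 0")
  case True
  then have "sig G' = (\<lambda>x. x)" unfolding sig_def by (intro ext) simp
  then show ?thesis using True by simp
next
  case False
  then have e: "sig G' = (\<lambda>x. (1 - exp (- G' * x)) / G')" unfolding sig_def by (intro ext) simp
  show ?thesis unfolding e using False
    by (auto intro!: derivative_eq_intros)
qed

lemma sig_strict:
  assumes ab: "a < b"
  shows "sig G' a < sig G' b"
proof (rule DERIV_pos_imp_increasing[where f="sig G'", OF ab])
  fix x show "\<exists>y. DERIV (sig G') x :> y \<and> 0 < y"
    using sig_deriv[of G' x] by (intro exI[of _ "exp (- G' * x)"]) simp
qed

lemma sig_le_iff: "sig G' a \<le> sig G' b \<longleftrightarrow> a \<le> b"
  using sig_strict by (metis not_less order_less_imp_le order.strict_iff_order)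

lemma sig_less_iff: "sig G' a < sig G' b \<longleftrightarrow> a < b"
  using sig_le_iff by (metis not_less)

lemma tau_deriv:
  assumes "1 - G' * s > 0"
  shows "(tau G' has_real_derivative exp (G' * tau G' s)) (at s)"
proof -
  have "exp (G' * tau G' s) * exp (- G' * tau G' s) = 1" by (simp add: exp_add[symmetric])
  then have "exp (G' * tau G' s) * (1 - G' * s) = 1" using tau_exp[OF assms] by simp
  then have ex: "exp (G' * tau G' s) = 1 / (1 - G' * s)" using assms by (simp add: eq_divide_eq)
  show ?thesis
  proof (cases "G' = 0")
    case True
    then have "tau G' = (\<lambda>x. x)" unfolding tau_def by (intro ext) simp
    then show ?thesis using True by simp
  next
    case False
    then have e: "tau G' = (\<lambda>x. - ln (1 - G' * x) / G')" unfolding tau_def by (intro ext) simp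
    show ?thesis unfolding ex unfolding e using False assms
      by (auto intro!: derivative_eq_intros simp: field_simps)
  qed
qed

definition Qc :: "real \<Rightarrow> real \<Rightarrow> real \<Rightarrow> real \<times> real" where
  "Qc G' h' th = (exp (- G' * th / 2) * cos th / h', exp (- G' * th / 2) * (sin th - G' * cos th / 2))"
definition Q1c :: "real \<Rightarrow> real \<Rightarrow> real \<Rightarrow> real \<times> real" where
  "Q1c G' h' th = (exp (G' * th / 2) * (- (G' * cos th / 2 + sin th) / h'),
                   exp (G' * th / 2) * ((1 + G'^2/4) * cos th))"
definition Q2c :: "real \<Rightarrow> real \<Rightarrow> real \<Rightarrow> real \<times> real" where
  "Q2c G' h' th = (- (1 + G'^2/4) * exp (2 * G' * th)) *\<^sub>R Qc G' h' th"

lemma exp_rel1: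
  fixes G' th :: real
  shows "exp (- G' * th) * exp (G' * th / 2) = exp (- G' * th / 2)"
proof -
  have "exp (- G' * th / 2) = exp (- G' * th + G' * th / 2)"
    by (rule arg_cong[where f=exp]) (simp add: field_simps)
  also have "\<dots> = exp (- G' * th) * exp (G' * th / 2)" by (rule exp_add)
  finally show ?thesis by simp
qed

lemma exp_rel2:
  fixes G' th :: real
  shows "exp (- G' * th) * (exp (2 * G' * th) * exp (- G' * th / 2)) = exp (G' * th / 2)"
proof -
  have "exp (G' * th / 2) = exp (- G' * th + (2 * G' * th + - G' * th / 2))"
    by (rule arg_cong[where f=exp]) (simp add: field_simps)
  also have "\<dots> = exp (- G' * th) * (exp (2 * G' * th) * exp (- G' * th / 2))" by (simp only: exp_add)
  finally show ?thesis by simp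
qed

lemma dQ:
  assumes hn: "h' \<noteq> 0"
  shows "(Qc G' h' has_vector_derivative exp (- G' * th) *\<^sub>R Q1c G' h' th) (at th)"
proof -
  have d1: "((\<lambda>th. exp (- G' * th / 2) * cos th / h') has_real_derivative
      exp (- G' * th) * (exp (G' * th / 2) * (- (G' * cos th / 2 + sin th) / h'))) (at th)"
    unfolding mult.assoc[symmetric] exp_rel1
    using hn by (auto intro!: derivative_eq_intros simp: field_simps)
  have d2: "((\<lambda>th. exp (- G' * th / 2) * (sin th - G' * cos th / 2)) has_real_derivative
      exp (- G' * th) * (exp (G' * th / 2) * ((1 + G'^2/4) * cos th))) (at th)"
    unfolding mult.assoc[symmetric] exp_rel1
    using hn by (auto intro!: derivative_eq_intros simp: field_simps power2_eq_square)
  show ?thesis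
    using has_vector_derivative_Pair[OF d1[unfolded has_real_derivative_iff_has_vector_derivative]
        d2[unfolded has_real_derivative_iff_has_vector_derivative]]
    unfolding Qc_def Q1c_def by simp
qed

lemma dQ1:
  assumes hn: "h' \<noteq> 0"
  shows "(Q1c G' h' has_vector_derivative exp (- G' * th) *\<^sub>R Q2c G' h' th) (at th)"
proof -
  have d1: "((\<lambda>th. exp (G' * th / 2) * (- (G' * cos th / 2 + sin th) / h')) has_real_derivative
      exp (- G' * th) * ((- (1 + G'^2/4) * exp (2 * G' * th)) * (exp (- G' * th / 2) * cos th / h'))) (at th)"
  proof -
    have "exp (- G' * th) * ((- (1 + G'^2/4) * exp (2 * G' * th)) * (exp (- G' * th / 2) * cos th / h'))
        = - (1 + G'^2/4) * (exp (- G' * th) * (exp (2 * G' * th) * exp (- G' * th / 2))) * cos th / h'"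
      using hn by (simp add: field_simps)
    also have "\<dots> = - (1 + G'^2/4) * exp (G' * th / 2) * cos th / h'" unfolding exp_rel2 ..
    finally have e: "exp (- G' * th) * ((- (1 + G'^2/4) * exp (2 * G' * th)) * (exp (- G' * th / 2) * cos th / h'))
        = - (1 + G'^2/4) * exp (G' * th / 2) * cos th / h'" .
    show ?thesis unfolding e
      using hn by (auto intro!: derivative_eq_intros simp: field_simps power2_eq_square)
  qed
  have d2: "((\<lambda>th. exp (G' * th / 2) * ((1 + G'^2/4) * cos th)) has_real_derivative
      exp (- G' * th) * ((- (1 + G'^2/4) * exp (2 * G' * th)) * (exp (- G' * th / 2) * (sin th - G' * cos th / 2)))) (at th)"
  proof -
    have "exp (- G' * th) * ((- (1 + G'^2/4) * exp (2 * G' * th)) * (exp (- G' * th / 2) * (sin th - G' * cos th / 2)))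
        = - (1 + G'^2/4) * (exp (- G' * th) * (exp (2 * G' * th) * exp (- G' * th / 2))) * (sin th - G' * cos th / 2)"
      by (simp add: field_simps)
    also have "\<dots> = - (1 + G'^2/4) * exp (G' * th / 2) * (sin th - G' * cos th / 2)" unfolding exp_rel2 ..
    finally have e: "exp (- G' * th) * ((- (1 + G'^2/4) * exp (2 * G' * th)) * (exp (- G' * th / 2) * (sin th - G' * cos th / 2)))
        = - (1 + G'^2/4) * exp (G' * th / 2) * (sin th - G' * cos th / 2)" .
    show ?thesis unfolding e
      using hn by (auto intro!: derivative_eq_intros simp: field_simps power2_eq_square)
  qed
  show ?thesis
    using has_vector_derivative_Pair[OF d1[unfolded has_real_derivative_iff_has_vector_derivative]
        d2[unfolded has_real_derivative_iff_has_vector_derivative]]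
    unfolding Q2c_def Q1c_def Qc_def by simp
qed

lemma comp_tau:
  assumes d: "\<And>th. (f has_vector_derivative exp (- G' * th) *\<^sub>R f1 th) (at th)"
    and s: "1 - G' * s > 0"
  shows "((\<lambda>s. f (tau G' s)) has_vector_derivative f1 (tau G' s)) (at s)"
proof -
  have "((f \<circ> tau G') has_vector_derivative exp (G' * tau G' s) *\<^sub>R (exp (- G' * tau G' s) *\<^sub>R f1 (tau G' s))) (at s)"
    by (rule vector_diff_chain_at[OF tau_deriv[OF s, unfolded has_real_derivative_iff_has_vector_derivative] d])
  moreover have "exp (G' * tau G' s) * exp (- G' * tau G' s) = 1"
    by (simp add: exp_add[symmetric])
  ultimately show ?thesis by (simp add: o_def)
qed


definition cross :: "real \<times> real \<Rightarrow> real \<times> real \<Rightarrow> real" where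
  "cross a b = fst a * snd b - snd a * fst b"

lemma cross_mir: "cross (mir a) (- mir b) = cross a b"
  unfolding cross_def mir_def by simp

lemma cross_mir': "cross (mir a) ((-1::real) *\<^sub>R mir b) = cross a b"
  unfolding cross_def mir_def by simp

lemma crossalg:
  fixes a b c s G h :: real
  assumes ab: "a * b = 1" and h: "h \<noteq> 0"
  shows "(a * c / h) * (b * ((1 + G^2/4) * c)) - (a * (s - G * c / 2)) * (b * (- (G * c / 2 + s) / h)) = (c^2 + s^2) / h"
proof -
  have "(a * c / h) * (b * ((1 + G^2/4) * c)) - (a * (s - G * c / 2)) * (b * (- (G * c / 2 + s) / h))
      = (a * b) * ((1 + G^2/4) * c * c + (s - G * c / 2) * (G * c / 2 + s)) / h"
    by (simp add: algebra_simps add_divide_distrib diff_divide_distrib)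
  also have "\<dots> = (c^2 + s^2) / h" unfolding ab by (simp add: algebra_simps power2_eq_square)
  finally show ?thesis .
qed

context fins begin

abbreviation "s1 \<equiv> sig G (-(pi/2))"
abbreviation "s2 \<equiv> sig G (pi/2)"
abbreviation "LL \<equiv> 2 * (s2 - s1)"
abbreviation "PP \<equiv> (\<lambda>s. Qc G h (tau G s))"
abbreviation "PP1 \<equiv> (\<lambda>s. Q1c G h (tau G s))"
abbreviation "PP2 \<equiv> (\<lambda>s. Q2c G h (tau G s))"

lemma s12: "s1 < s2" by (rule sig_strict) simp

lemma L_pos: "LL > 0" using s12 by simp

lemma s1L: "s1 + LL/2 = s2" by (simp add: field_simps)

lemma dom:
  assumes "s1 \<le> s" "s \<le> s2"
  shows "1 - G * s > 0"
proof (cases "G \<ge> 0")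
  case True
  have "G * s \<le> G * s2" using True assms by (simp add: mult_left_mono)
  moreover have "1 - G * s2 > 0" using sig_exp[of G "pi/2"] by simp
  ultimately show ?thesis by linarith
next
  case False
  have "G * s \<le> G * s1" using False assms by (simp add: mult_left_mono_neg)
  moreover have "1 - G * s1 > 0" using sig_exp[of G "-(pi/2)"] by simp
  ultimately show ?thesis by linarith
qed

lemma tau_range:
  assumes "s1 \<le> s" "s \<le> s2"
  shows "-(pi/2) \<le> tau G s" "tau G s \<le> pi/2"
proof -
  have e: "sig G (tau G s) = s" by (rule sig_tau[OF dom[OF assms]])
  have "sig G (-(pi/2)) \<le> sig G (tau G s)" using assms(1) e by simp
  then show "-(pi/2) \<le> tau G s" unfolding sig_le_iff .
  have "sig G (tau G s) \<le> sig G (pi/2)" using assms(2) e by simp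
  then show "tau G s \<le> pi/2" unfolding sig_le_iff .
qed

lemma tau_range_strict:
  assumes "s1 < s" "s < s2"
  shows "-(pi/2) < tau G s" "tau G s < pi/2"
proof -
  have e: "sig G (tau G s) = s" by (rule sig_tau[OF dom]) (use assms in auto)
  have "sig G (-(pi/2)) < sig G (tau G s)" using assms(1) e by simp
  then show "-(pi/2) < tau G s" unfolding sig_less_iff .
  have "sig G (tau G s) < sig G (pi/2)" using assms(2) e by simp
  then show "tau G s < pi/2" unfolding sig_less_iff .
qed

lemma dP: "s1 \<le> s \<Longrightarrow> s \<le> s1 + LL/2 \<Longrightarrow> (PP has_vector_derivative PP1 s) (at s)"
  unfolding s1L by (rule comp_tau[OF dQ dom]) (use h_pos in auto)

lemma dP1: "s1 \<le> s \<Longrightarrow> s \<le> s1 + LL/2 \<Longrightarrow> (PP1 has_vector_derivative PP2 s) (at s)"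
  unfolding s1L by (rule comp_tau[OF dQ1 dom]) (use h_pos in auto)

lemma tau1: "tau G s1 = -(pi/2)" by (rule tau_sig)
lemma tau2: "tau G (s1 + LL/2) = pi/2" unfolding s1L by (rule tau_sig)

lemma j_all:
  shows "(1::real) *\<^sub>R mir (PP s1) = PP s1" "(1::real) *\<^sub>R mir (PP (s1 + LL/2)) = PP (s1 + LL/2)"
    "(-1::real) *\<^sub>R mir (PP1 s1) = PP1 s1" "(-1::real) *\<^sub>R mir (PP1 (s1 + LL/2)) = PP1 (s1 + LL/2)"
    "(- (-1::real)) *\<^sub>R mir (PP2 s1) = PP2 s1" "(- (-1::real)) *\<^sub>R mir (PP2 (s1 + LL/2)) = PP2 (s1 + LL/2)"
  unfolding tau1 tau2 by (simp_all add: mir_def Qc_def Q1c_def Q2c_def)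

definition "gam = pfold LL (pext s1 LL 1 PP)"
definition "dd1 = pfold LL (pext s1 LL (-1) PP1)"
definition "dd2 = pfold LL (pext s1 LL 1 PP2)"

lemma gam_deriv: "(gam has_vector_derivative dd1 t) (at t)"
  unfolding gam_def dd1_def
proof (rule pfold_deriv[OF L_pos])
  fix x assume x: "-LL/2 < x" "x < LL"
  show "(pext s1 LL 1 PP has_vector_derivative pext s1 LL (-1) PP1 x) (at x)"
    using pext_deriv[OF L_pos dP j_all(1,2) _ _ x] j_all(3,4) by simp
  show "pfold LL (pext s1 LL 1 PP) x = pext s1 LL 1 PP x" by (rule pfold_pext) (use x in auto)
  show "pfold LL (pext s1 LL (-1) PP1) x = pext s1 LL (-1) PP1 x" by (rule pfold_pext) (use x in auto)
qed

lemma dd1_deriv: "(dd1 has_vector_derivative dd2 t) (at t)"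
  unfolding dd2_def dd1_def
proof (rule pfold_deriv[OF L_pos])
  fix x assume x: "-LL/2 < x" "x < LL"
  show "(pext s1 LL (-1) PP1 has_vector_derivative pext s1 LL 1 PP2 x) (at x)"
    using pext_deriv[OF L_pos dP1 j_all(3,4) _ _ x] j_all(5,6) by simp
  show "pfold LL (pext s1 LL (-1) PP1) x = pext s1 LL (-1) PP1 x" by (rule pfold_pext) (use x in auto)
  show "pfold LL (pext s1 LL 1 PP2) x = pext s1 LL 1 PP2 x" by (rule pfold_pext) (use x in auto)
qed

lemma crossQ: "cross (Qc G h th) (Q1c G h th) = 1/h"
proof -
  have ee: "exp (- G * th / 2) * exp (G * th / 2) = 1" by (simp add: exp_add[symmetric])
  have "(exp (- G * th / 2) * cos th / h) * (exp (G * th / 2) * ((1 + G^2/4) * cos th))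
     - (exp (- G * th / 2) * (sin th - G * cos th / 2)) * (exp (G * th / 2) * (- (G * cos th / 2 + sin th) / h))
     = ((cos th)^2 + (sin th)^2) / h"
    by (rule crossalg[OF ee]) (use h_pos in simp)
  then show ?thesis unfolding cross_def Qc_def Q1c_def fst_conv snd_conv by simp
qed

lemma pext_val:
  "x \<le> 0 \<Longrightarrow> pext s1 LL e f x = e *\<^sub>R mir (f (s1 - x))"
  "\<not> x \<le> 0 \<Longrightarrow> x \<le> LL/2 \<Longrightarrow> pext s1 LL e f x = f (s1 + x)"
  "\<not> x \<le> 0 \<Longrightarrow> \<not> x \<le> LL/2 \<Longrightarrow> pext s1 LL e f x = e *\<^sub>R mir (f (s1 + LL - x))"
  unfolding pext_def by simp_all

lemma pext_props:
  "cross (pext s1 LL 1 PP x) (pext s1 LL (-1) PP1 x) = 1/h \<and>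
   (\<exists>k>0. pext s1 LL 1 PP2 x = (-k) *\<^sub>R pext s1 LL 1 PP x)"
proof -
  have k: "\<exists>k>0. Q2c G h th = (-k) *\<^sub>R Qc G h th" for th
  proof (rule exI[of _ "(1 + G^2/4) * exp (2 * G * th)"], rule conjI)
    have "0 \<le> G^2/4" by simp
    then have "0 < 1 + G^2/4" by linarith
    then show "0 < (1 + G^2/4) * exp (2 * G * th)" by simp
    show "Q2c G h th = (- ((1 + G^2/4) * exp (2 * G * th))) *\<^sub>R Qc G h th" unfolding Q2c_def by (simp only: mult_minus_left)
  qed
  have km: "\<exists>k>0. (1::real) *\<^sub>R mir (Q2c G h th) = (-k) *\<^sub>R ((1::real) *\<^sub>R mir (Qc G h th))" for th
  proof -
    obtain k where "k > 0" "Q2c G h th = (-k) *\<^sub>R Qc G h th" using k by blast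
    then show ?thesis by (intro exI[of _ k]) (simp add: mir_scale mir_neg)
  qed
  have cm: "cross ((1::real) *\<^sub>R mir (Qc G h th)) ((-1::real) *\<^sub>R mir (Q1c G h th)) = 1/h" for th
    using crossQ[of th] cross_mir'[of "Qc G h th" "Q1c G h th"] by simp
  consider "x \<le> 0" | "\<not> x \<le> 0" "x \<le> LL/2" | "\<not> x \<le> 0" "\<not> x \<le> LL/2" by blast
  then show ?thesis
  proof cases
    case 1 show ?thesis unfolding pext_val(1)[OF 1] using cm km by blast
  next
    case 2 show ?thesis unfolding pext_val(2)[OF 2] using crossQ k by blast
  next
    case 3 show ?thesis unfolding pext_val(3)[OF 3] using cm km by blast
  qed
qed

lemma gam_props:
  "cross (gam t) (dd1 t) = 1/h \<and> (\<exists>k>0. dd2 t = (-k) *\<^sub>R gam t)"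
  unfolding gam_def dd1_def dd2_def pfold_def by (rule pext_props)

lemma dd1_nz: "dd1 t \<noteq> 0"
proof
  assume "dd1 t = 0"
  then have "cross (gam t) (dd1 t) = 0" unfolding cross_def by simp
  then show False using gam_props[of t] h_pos by simp
qed

lemma curv_pos: "signed_curvature (dd1 t) (dd2 t) > 0"
proof -
  obtain k where k: "k > 0" "dd2 t = (-k) *\<^sub>R gam t" using gam_props by blast
  have c: "cross (gam t) (dd1 t) = 1/h" using gam_props by blast
  have num: "fst (dd1 t) * snd (dd2 t) - snd (dd1 t) * fst (dd2 t) = k / h"
    using c unfolding k(2) cross_def by (simp add: algebra_simps)
  have "(fst (dd1 t))^2 + (snd (dd1 t))^2 > 0"
    using dd1_nz[of t] by (metis prod_eq_iff sum_power2_gt_zero_iff fst_zero snd_zero)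
  then have "sqrt ((fst (dd1 t))^2 + (snd (dd1 t))^2) ^ 3 > 0" by simp
  then show ?thesis unfolding signed_curvature_def num using k h_pos by simp
qed

end

lemma half_polar:
  fixes u v :: real
  assumes pos: "sqrt (u^2+v^2) + u > 0"
  shows "sqrt (u^2+v^2) * cos (2 * arctan (v / (sqrt (u^2+v^2) + u))) = u"
    and "sqrt (u^2+v^2) * sin (2 * arctan (v / (sqrt (u^2+v^2) + u))) = v"
proof -
  define r where "r = sqrt (u^2+v^2)"
  define R where "R = r + u"
  define w where "w = v / R"
  have R: "R > 0" using pos unfolding R_def r_def by simp
  have rr: "r * r = u * u + v * v" unfolding r_def by (simp flip: power2_eq_square)
  have ru: "\<bar>u\<bar> \<le> r" unfolding r_def by (simp add: real_sqrt_ge_abs1)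
  have rpos: "r > 0"
  proof (rule ccontr)
    assume "\<not> r > 0"
    then have "r = 0" using ru by simp
    then show False using R ru unfolding R_def by simp
  qed
  have s1: "R * R + v * v = 2 * r * R" unfolding R_def using rr by (simp add: algebra_simps)
  have s2: "R * R - v * v = 2 * u * R" unfolding R_def using rr by (simp add: algebra_simps)
  have c2: "(cos (arctan w))^2 = 1 / (1 + w^2)" unfolding cos_arctan
    by (simp add: power_divide)
  have sn2: "(sin (arctan w))^2 = w^2 / (1 + w^2)" unfolding sin_arctan
    by (simp add: power_divide)
  have sc: "sin (arctan w) * cos (arctan w) = w / (1 + w^2)" unfolding sin_arctan cos_arctan
    by (simp add: field_simps)
  have "1 + w^2 = (R * R + v * v) / (R * R)" unfolding w_def using R by (simp add: field_simps power2_eq_square)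
  also have "\<dots> = 2 * r / R" unfolding s1 using R by (simp add: field_simps)
  finally have opw: "1 + w^2 = 2 * r / R" .
  have "1 - w^2 = (R * R - v * v) / (R * R)" unfolding w_def using R by (simp add: field_simps power2_eq_square)
  also have "\<dots> = 2 * u / R" unfolding s2 using R by (simp add: field_simps)
  finally have omw: "1 - w^2 = 2 * u / R" .
  have "cos (2 * arctan w) = (1 - w^2) / (1 + w^2)"
    unfolding cos_double c2 sn2 by (simp add: diff_divide_distrib)
  also have "\<dots> = u / r" unfolding opw omw using R rpos by (simp add: field_simps)
  finally have cc: "cos (2 * arctan w) = u / r" .
  have "sin (2 * arctan w) = 2 * (w / (1 + w^2))" unfolding sin_double using sc by (simp add: mult.assoc)
  also have "\<dots> = v / r" unfolding opw using R rpos by (simp add: field_simps w_def)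
  finally have ss: "sin (2 * arctan w) = v / r" .
  show "sqrt (u^2+v^2) * cos (2 * arctan (v / (sqrt (u^2+v^2) + u))) = u"
    using cc rpos unfolding w_def R_def r_def by simp
  show "sqrt (u^2+v^2) * sin (2 * arctan (v / (sqrt (u^2+v^2) + u))) = v"
    using ss rpos unfolding w_def R_def r_def by simp
qed

context fins begin

lemma G_eq: "G = g / h" unfolding fG_def ..

lemma K_right:
  assumes "fst R \<ge> 0"
  shows "finsleroidK g R = Kt G (h * fst R) (snd R + g * fst R / 2)"
  using assms unfolding K_eq_all fq_def fA_def fZ_def by simp

lemma K_mir: "finsleroidK g (mir R) = finsleroidK g R"
  unfolding K_eq_all fq_def fA_def fZ_def mir_def by simp

lemma Q_polar:
  "h * fst (Qc G h th) = exp (- G * th / 2) * cos th"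
  "snd (Qc G h th) + g * fst (Qc G h th) / 2 = exp (- G * th / 2) * sin th"
  using h_pos unfolding Qc_def G_eq by (simp_all add: field_simps)

lemma Q_fst_nonneg: "-(pi/2) \<le> th \<Longrightarrow> th \<le> pi/2 \<Longrightarrow> fst (Qc G h th) \<ge> 0"
  unfolding Qc_def using h_pos cos_ge_zero by simp

lemma Q_fst_pos: "-(pi/2) < th \<Longrightarrow> th < pi/2 \<Longrightarrow> fst (Qc G h th) > 0"
  unfolding Qc_def using h_pos cos_gt_zero_pi by simp

lemma K_Q:
  assumes th: "-(pi/2) \<le> th" "th \<le> pi/2"
  shows "finsleroidK g (Qc G h th) = 1"
proof -
  define e where "e = exp (- G * th / 2)"
  have e: "e > 0" unfolding e_def by simp
  have K: "finsleroidK g (Qc G h th) = Kt G (e * cos th) (e * sin th)"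
    unfolding K_right[OF Q_fst_nonneg[OF th]] Q_polar e_def ..
  have sq: "sqrt ((e * cos th)^2 + (e * sin th)^2) = e"
  proof -
    have "(e * cos th)^2 + (e * sin th)^2 = e^2" by (simp add: power_mult_distrib flip: distrib_left)
    then show ?thesis using e by simp
  qed
  have c1: "1 + cos th > 0" using cos_ge_zero[OF th] by simp
  have ee: "e + e * cos th = e * (cos th + 1)" by (simp add: algebra_simps)
  have "e * sin th / (e + e * cos th) = sin th / (cos th + 1)"
    unfolding ee using e by simp
  also have "\<dots> = tan (th / 2)" using tan_half[of "th/2"] by simp
  finally have w: "e * sin th / (e + e * cos th) = tan (th/2)" .
  have at: "arctan (tan (th/2)) = th/2" using th pi_gt_zero by (intro arctan_tan) linarith+
  have "Kt G (e * cos th) (e * sin th) = e * exp (G * (th/2))"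
    unfolding Kt_def sq w at ..
  also have "\<dots> = 1" unfolding e_def by (simp add: exp_add[symmetric])
  finally show ?thesis unfolding K .
qed

lemma K_pos:
  assumes "R \<noteq> 0"
  shows "finsleroidK g R > 0"
proof -
  have "R \<noteq> (0,0)" using assms by (simp add: zero_prod_def)
  have nz: "h * fq R \<noteq> 0 \<or> fA g R \<noteq> 0"
  proof (rule ccontr)
    assume "\<not> ?thesis"
    then have "fq R = 0" "fA g R = 0" using h_pos by auto
    then have "fst R = 0" "snd R = 0" unfolding fq_def fA_def fZ_def by auto
    then show False using assms by (simp add: prod_eq_iff)
  qed
  have "(h * fq R)^2 + (fA g R)^2 > 0" using nz by (simp add: sum_power2_gt_zero_iff)
  then show ?thesis unfolding K_eq_all Kt_def by simp
qed

lemma K_zero: "finsleroidK g 0 = 0" unfolding finsleroidK_def by (simp add: zero_prod_def)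

lemma surj_Q:
  assumes K1: "finsleroidK g R = 1" and f: "fst R \<ge> 0"
  shows "\<exists>th. -(pi/2) \<le> th \<and> th \<le> pi/2 \<and> R = Qc G h th \<and> (fst R > 0 \<longrightarrow> -(pi/2) < th \<and> th < pi/2)"
proof -
  define u where "u = h * fst R"
  define v where "v = snd R + g * fst R / 2"
  define r where "r = sqrt (u^2+v^2)"
  define al where "al = arctan (v / (r + u))"
  have R0: "R \<noteq> 0" using K1 K_zero by auto
  have u0: "u \<ge> 0" unfolding u_def using h_pos f by simp
  have uv: "u \<noteq> 0 \<or> v \<noteq> 0"
  proof (rule ccontr)
    assume "\<not> ?thesis"
    then have "fst R = 0" "snd R = 0" unfolding u_def v_def using h_pos by auto
    then show False using R0 by (simp add: prod_eq_iff)
  qed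
  have pos: "r + u > 0" unfolding r_def by (rule pos_cond[OF u0 uv])
  have rv: "\<bar>v\<bar> \<le> r" unfolding r_def by (simp add: real_sqrt_ge_abs2)
  have vr: "\<bar>v\<bar> \<le> r + u" using rv u0 by linarith
  have "\<bar>v / (r + u)\<bar> = \<bar>v\<bar> / (r + u)" using pos by (simp add: abs_divide)
  then have w1: "\<bar>v / (r + u)\<bar> \<le> 1" using pos vr by (simp add: pos_divide_le_eq)
  have wa: "v / (r + u) \<le> 1" using w1 by (rule abs_le_D1)
  have wb: "-1 \<le> v / (r + u)" using abs_le_D2[OF w1] by simp
  have al1: "al \<le> pi/4" unfolding al_def arctan_one[symmetric] arctan_le_iff using wa .
  have "arctan (-1) \<le> arctan (v / (r + u))" unfolding arctan_le_iff using wb .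
  then have al2: "-(pi/4) \<le> al" unfolding al_def by (simp add: arctan_minus arctan_one)
  have pc: "r * cos (2 * al) = u" and ps: "r * sin (2 * al) = v"
    using half_polar[OF pos[unfolded r_def]] unfolding al_def r_def by auto
  have "finsleroidK g R = r * exp (G * al)"
    unfolding K_right[OF f] Kt_def al_def r_def u_def v_def ..
  then have rexp: "r = exp (- G * (2 * al) / 2)" using K1 by (simp add: exp_minus field_simps)
  have "Qc G h (2 * al) = R"
  proof -
    have "fst (Qc G h (2 * al)) = fst R"
      using pc h_pos unfolding Qc_def rexp[symmetric] u_def by simp
    moreover have "snd (Qc G h (2 * al)) = snd R"
    proof -
      have "snd (Qc G h (2 * al)) = v - G * u / 2"
        using pc ps unfolding Qc_def rexp[symmetric] by (simp add: algebra_simps)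
      also have "\<dots> = snd R" unfolding v_def u_def G_eq using h_pos by simp
      finally show ?thesis .
    qed
    ultimately show ?thesis by (simp add: prod_eq_iff)
  qed
  moreover have "fst R > 0 \<longrightarrow> -(pi/2) < 2 * al \<and> 2 * al < pi/2"
  proof
    assume "fst R > 0"
    then have "u > 0" unfolding u_def using h_pos by simp
    then have cz: "cos (2 * al) \<noteq> 0" using pc by auto
    have n1: "2 * al \<noteq> pi/2"
    proof
      assume a: "2 * al = pi/2"
      show False using cz unfolding a by simp
    qed
    have n2: "2 * al \<noteq> -(pi/2)"
    proof
      assume a: "2 * al = -(pi/2)"
      show False using cz unfolding a by simp
    qed
    show "-(pi/2) < 2 * al \<and> 2 * al < pi/2" using n1 n2 al1 al2 by linarith
  qed
  ultimately show ?thesis using al1 al2 by (intro exI[of _ "2 * al"]) auto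
qed

lemma Q_inj:
  assumes a: "-(pi/2) \<le> a" "a \<le> pi/2" and b: "-(pi/2) \<le> b" "b \<le> pi/2"
    and eq: "Qc G h a = Qc G h b"
  shows "a = b"
proof -
  define ea where "ea = exp (- G * a / 2)"
  define eb where "eb = exp (- G * b / 2)"
  have c: "ea * cos a = eb * cos b" using Q_polar(1)[of a] Q_polar(1)[of b] eq unfolding ea_def eb_def by simp
  have s: "ea * sin a = eb * sin b" using Q_polar(2)[of a] Q_polar(2)[of b] eq unfolding ea_def eb_def by simp
  have "ea^2 = (ea * cos a)^2 + (ea * sin a)^2" by (simp add: power_mult_distrib flip: distrib_left)
  also have "\<dots> = (eb * cos b)^2 + (eb * sin b)^2" unfolding c s ..
  also have "\<dots> = eb^2" by (simp add: power_mult_distrib flip: distrib_left)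
  finally have "ea = eb" by (rule power2_eq_imp_eq) (simp_all add: ea_def eb_def)
  moreover have "eb > 0" unfolding eb_def by simp
  ultimately have "sin a = sin b" using s by simp
  then show ?thesis using arcsin_sin[OF a] arcsin_sin[OF b] by metis
qed

end

lemma mir_mir: "mir (mir p) = p" unfolding mir_def by simp
lemma mir_fst: "fst (mir p) = - fst p" unfolding mir_def by simp

lemma floor_rem:
  fixes x L :: real
  assumes "L > 0"
  shows "0 \<le> x - L * of_int \<lfloor>x / L\<rfloor>" "x - L * of_int \<lfloor>x / L\<rfloor> < L"
proof -
  have a: "of_int \<lfloor>x / L\<rfloor> \<le> x / L" by simp
  have b: "x / L < of_int \<lfloor>x / L\<rfloor> + 1" by linarith
  have "of_int \<lfloor>x / L\<rfloor> * L \<le> x" using a assms by (simp add: le_divide_eq)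
  then have "L * of_int \<lfloor>x / L\<rfloor> \<le> x" by (simp add: mult.commute)
  then show "0 \<le> x - L * of_int \<lfloor>x / L\<rfloor>" by simp
  have "x < (of_int \<lfloor>x / L\<rfloor> + 1) * L" using b unfolding pos_divide_less_eq[OF assms] .
  then have "x < L * (of_int \<lfloor>x / L\<rfloor> + 1)" by (simp add: mult.commute)
  then show "x - L * of_int \<lfloor>x / L\<rfloor> < L" by (simp add: algebra_simps)
qed

context fins begin

lemma pv1:
  assumes "0 \<le> x" "x \<le> LL/2"
  shows "pext s1 LL 1 PP x = Qc G h (tau G (s1 + x))"
proof (cases "x = 0")
  case True
  then show ?thesis using pext_val(1)[of 0 1 PP] j_all(1) by simp
next
  case False
  then show ?thesis using pext_val(2)[of x 1 PP] assms by simp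
qed

lemma pv2:
  assumes "LL/2 < x" "x < LL"
  shows "pext s1 LL 1 PP x = mir (Qc G h (tau G (s1 + LL - x)))"
  using pext_val(3)[of x 1 PP] assms L_pos by simp

lemma pv1_range:
  assumes "0 \<le> x" "x \<le> LL/2"
  shows "-(pi/2) \<le> tau G (s1 + x)" "tau G (s1 + x) \<le> pi/2" "1 - G * (s1 + x) > 0"
proof -
  have r: "s1 \<le> s1 + x" "s1 + x \<le> s2" using assms s1L by linarith+
  show "-(pi/2) \<le> tau G (s1 + x)" "tau G (s1 + x) \<le> pi/2" using tau_range[OF r] by auto
  show "1 - G * (s1 + x) > 0" using dom[OF r] .
qed

lemma pv2_range:
  assumes "LL/2 < x" "x < LL"
  shows "-(pi/2) < tau G (s1 + LL - x)" "tau G (s1 + LL - x) < pi/2" "1 - G * (s1 + LL - x) > 0"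
proof -
  have r: "s1 < s1 + LL - x" "s1 + LL - x < s2" using assms s1L by linarith+
  show "-(pi/2) < tau G (s1 + LL - x)" "tau G (s1 + LL - x) < pi/2" using tau_range_strict[OF r] by auto
  show "1 - G * (s1 + LL - x) > 0" using dom r by simp
qed

lemma pext_img: "pext s1 LL 1 PP ` {0..<LL} = {R. finsleroidK g R = 1}"
proof
  show "pext s1 LL 1 PP ` {0..<LL} \<subseteq> {R. finsleroidK g R = 1}"
  proof
    fix R assume "R \<in> pext s1 LL 1 PP ` {0..<LL}"
    then obtain x where x: "0 \<le> x" "x < LL" and R: "R = pext s1 LL 1 PP x" by auto
    show "R \<in> {R. finsleroidK g R = 1}"
    proof (cases "x \<le> LL/2")
      case True
      then show ?thesis unfolding R pv1[OF x(1) True] using K_Q pv1_range[OF x(1) True] by simp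
    next
      case False
      then have x2: "LL/2 < x" by simp
      have "finsleroidK g (Qc G h (tau G (s1 + LL - x))) = 1"
        by (rule K_Q) (use pv2_range[OF x2 x(2)] in auto)
      then show ?thesis unfolding R pv2[OF x2 x(2)] using K_mir[of "Qc G h (tau G (s1 + LL - x))"] by simp
    qed
  qed
  show "{R. finsleroidK g R = 1} \<subseteq> pext s1 LL 1 PP ` {0..<LL}"
  proof
    fix R assume "R \<in> {R. finsleroidK g R = 1}"
    then have K1: "finsleroidK g R = 1" by simp
    show "R \<in> pext s1 LL 1 PP ` {0..<LL}"
    proof (cases "fst R \<ge> 0")
      case True
      obtain th where th: "-(pi/2) \<le> th" "th \<le> pi/2" "R = Qc G h th" using surj_Q[OF K1 True] by blast
      define x where "x = sig G th - s1"
      have x0: "0 \<le> x" unfolding x_def using th(1) sig_le_iff by simp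
      have x1: "x \<le> LL/2" unfolding x_def using th(2) sig_le_iff s1L by simp
      have sx: "s1 + x = sig G th" unfolding x_def by simp
      have "pext s1 LL 1 PP x = R" using pv1[OF x0 x1] unfolding sx th(3) by (simp add: tau_sig)
      moreover have "x \<in> {0..<LL}" using x0 x1 L_pos by simp
      ultimately show ?thesis by (metis image_eqI)
    next
      case False
      have K1': "finsleroidK g (mir R) = 1" using K1 K_mir by simp
      have f: "fst (mir R) > 0" using False mir_fst[of R] by simp
      obtain th where th: "-(pi/2) < th" "th < pi/2" "mir R = Qc G h th"
        using surj_Q[OF K1' less_imp_le[OF f]] f by blast
      define x where "x = s1 + LL - sig G th"
      have x0: "LL/2 < x" unfolding x_def using th(2) sig_less_iff[of G th "pi/2"] s1L by simp
      have x1: "x < LL" unfolding x_def using th(1) sig_less_iff[of G "-(pi/2)" th] by simp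
      have "pext s1 LL 1 PP x = R" unfolding pv2[OF x0 x1] unfolding x_def
        by (simp add: tau_sig th(3)[symmetric] mir_mir)
      moreover have "x \<in> {0..<LL}" using x0 x1 L_pos by simp
      ultimately show ?thesis by (metis image_eqI)
    qed
  qed
qed

lemma pext_fst1: "0 \<le> x \<Longrightarrow> x \<le> LL/2 \<Longrightarrow> fst (pext s1 LL 1 PP x) \<ge> 0"
  using pv1 pv1_range Q_fst_nonneg by simp

lemma pext_fst2: "LL/2 < x \<Longrightarrow> x < LL \<Longrightarrow> fst (pext s1 LL 1 PP x) < 0"
  using pv2 pv2_range Q_fst_pos mir_fst by simp

lemma pext_inj: "inj_on (pext s1 LL 1 PP) {0..<LL}"
proof (rule inj_onI)
  fix x y assume x: "x \<in> {0..<LL}" and y: "y \<in> {0..<LL}" and eq: "pext s1 LL 1 PP x = pext s1 LL 1 PP y"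
  consider "x \<le> LL/2" "y \<le> LL/2" | "x \<le> LL/2" "\<not> y \<le> LL/2" | "\<not> x \<le> LL/2" "y \<le> LL/2"
    | "\<not> x \<le> LL/2" "\<not> y \<le> LL/2" by blast
  then show "x = y"
  proof cases
    case 1
    have a: "0 \<le> x" "0 \<le> y" using x y by auto
    have "Qc G h (tau G (s1 + x)) = Qc G h (tau G (s1 + y))" using eq pv1[OF a(1) 1(1)] pv1[OF a(2) 1(2)] by simp
    then have "tau G (s1 + x) = tau G (s1 + y)"
      using Q_inj pv1_range[OF a(1) 1(1)] pv1_range[OF a(2) 1(2)] by blast
    then have "sig G (tau G (s1 + x)) = sig G (tau G (s1 + y))" by simp
    then show ?thesis using sig_tau pv1_range(3)[OF a(1) 1(1)] pv1_range(3)[OF a(2) 1(2)] by simp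
  next
    case 2
    then show ?thesis using pext_fst1[of x] pext_fst2[of y] eq x y by auto
  next
    case 3
    then show ?thesis using pext_fst1[of y] pext_fst2[of x] eq x y by auto
  next
    case 4
    have a: "LL/2 < x" "x < LL" "LL/2 < y" "y < LL" using 4 x y by auto
    have "mir (Qc G h (tau G (s1 + LL - x))) = mir (Qc G h (tau G (s1 + LL - y)))"
      using eq pv2[OF a(1,2)] pv2[OF a(3,4)] by simp
    then have "Qc G h (tau G (s1 + LL - x)) = Qc G h (tau G (s1 + LL - y))" by (metis mir_mir)
    then have "tau G (s1 + LL - x) = tau G (s1 + LL - y)"
      using Q_inj pv2_range[OF a(1,2)] pv2_range[OF a(3,4)] by (meson less_imp_le)
    then have "sig G (tau G (s1 + LL - x)) = sig G (tau G (s1 + LL - y))" by simp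
    then show ?thesis using sig_tau pv2_range(3)[OF a(1,2)] pv2_range(3)[OF a(3,4)] by simp
  qed
qed

lemma gam_small: "0 \<le> x \<Longrightarrow> x < LL \<Longrightarrow> gam x = pext s1 LL 1 PP x"
  unfolding gam_def by (rule pfold_small)

lemma gam_img: "gam ` {0..<LL} = {R. finsleroidK g R = 1}"
  unfolding pext_img[symmetric] by (rule image_cong) (auto simp: gam_small)

lemma gam_inj: "inj_on gam {0..<LL}"
  using pext_inj by (rule inj_on_cong[THEN iffD2, rotated]) (auto simp: gam_small)

lemma gam_per: "gam (t + LL) = gam t"
  unfolding gam_def by (rule pfold_per[OF L_pos])

lemma K_gam: "finsleroidK g (gam x) = 1"
proof -
  define y where "y = x - LL * of_int \<lfloor>x / LL\<rfloor>"
  have y: "0 \<le> y" "y < LL" unfolding y_def using floor_rem[OF L_pos] by auto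
  have "gam x = pext s1 LL 1 PP y" unfolding gam_def pfold_def y_def ..
  also have "\<dots> = gam y" using gam_small[OF y] by simp
  finally have "gam x \<in> gam ` {0..<LL}" using y by auto
  then show ?thesis unfolding gam_img by simp
qed

lemma gam_cont: "continuous_on UNIV gam"
  by (intro continuous_at_imp_continuous_on ballI has_vector_derivative_continuous[OF gam_deriv])

lemma S_eq: "{R. finsleroidK g R \<le> 1} = (\<lambda>p. fst p *\<^sub>R gam (snd p)) ` ({0..1} \<times> {0..LL})"
proof
  show "{R. finsleroidK g R \<le> 1} \<subseteq> (\<lambda>p. fst p *\<^sub>R gam (snd p)) ` ({0..1} \<times> {0..LL})"
  proof
    fix R assume R: "R \<in> {R. finsleroidK g R \<le> 1}"
    show "R \<in> (\<lambda>p. fst p *\<^sub>R gam (snd p)) ` ({0..1} \<times> {0..LL})"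
    proof (cases "R = 0")
      case True
      then have "R = (\<lambda>p. fst p *\<^sub>R gam (snd p)) (0, 0)" by simp
      moreover have "(0::real, 0::real) \<in> {0..1} \<times> {0..LL}" using L_pos by simp
      ultimately show ?thesis by blast
    next
      case False
      define c where "c = finsleroidK g R"
      have c: "c > 0" "c \<le> 1" using K_pos[OF False] R unfolding c_def by auto
      have "finsleroidK g ((1/c) *\<^sub>R R) = 1" using K_hom[of "1/c" R] c unfolding c_def by simp
      then have "(1/c) *\<^sub>R R \<in> gam ` {0..<LL}" unfolding gam_img by simp
      then obtain x where x: "x \<in> {0..<LL}" "(1/c) *\<^sub>R R = gam x" by auto
      have "R = c *\<^sub>R gam x" using x(2)[symmetric] c by simp
      then have "R = (\<lambda>p. fst p *\<^sub>R gam (snd p)) (c, x)" by simp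
      moreover have "(c, x) \<in> {0..1} \<times> {0..LL}" using c x by auto
      ultimately show ?thesis by blast
    qed
  qed
  show "(\<lambda>p. fst p *\<^sub>R gam (snd p)) ` ({0..1} \<times> {0..LL}) \<subseteq> {R. finsleroidK g R \<le> 1}"
  proof
    fix R assume "R \<in> (\<lambda>p. fst p *\<^sub>R gam (snd p)) ` ({0..1} \<times> {0..LL})"
    then obtain p where p: "p \<in> {0..1} \<times> {0..LL}" "R = fst p *\<^sub>R gam (snd p)" by auto
    define c where "c = fst p"
    define x where "x = snd p"
    have cx: "c \<in> {0..1}" "R = c *\<^sub>R gam x" using p unfolding c_def x_def by auto
    have "finsleroidK g R = c" using K_hom[of c "gam x"] cx K_gam by simp
    then show "R \<in> {R. finsleroidK g R \<le> 1}" using cx by simp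
  qed
qed

lemma S_compact: "compact {R. finsleroidK g R \<le> 1}"
proof -
  have "continuous_on UNIV (\<lambda>p::real \<times> real. fst p *\<^sub>R gam (snd p))"
    by (intro continuous_intros continuous_on_compose2[OF gam_cont]) auto
  then show ?thesis unfolding S_eq
    by (intro compact_continuous_image compact_Times compact_Icc) (auto intro: continuous_on_subset)
qed

lemma h_le1: "h \<le> 1"
proof -
  have h2: "h^2 \<le> 1" using h_sq by simp
  show ?thesis
  proof (rule ccontr)
    assume "\<not> h \<le> 1"
    then have "1 < h" by simp
    then have "1 < h^2" by (rule one_less_power) simp
    then show False using h2 by simp
  qed
qed

lemma K_bound: "finsleroidK g R \<le> 3 * exp (\<bar>G\<bar> * pi / 2) * norm R"
proof -
  define u where "u = h * fq R"
  define v where "v = fA g R"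
  have n1: "\<bar>fst R\<bar> \<le> norm R" using norm_fst_le[of "fst R" "snd R"] by simp
  have n2: "\<bar>snd R\<bar> \<le> norm R" using norm_snd_le[of "snd R" "fst R"] by simp
  have uu: "\<bar>u\<bar> \<le> norm R" unfolding u_def fq_def using h_pos h_le1 n1
    by (simp add: abs_mult) (metis mult_le_cancel_right1 abs_ge_zero order_trans mult.commute mult_right_le_one_le h_pos less_imp_le)
  have gq: "\<bar>g * fq R / 2\<bar> \<le> norm R"
  proof -
    have "\<bar>g * fq R / 2\<bar> = (\<bar>g\<bar> / 2) * fq R" unfolding fq_def by (simp add: abs_mult)
    also have "\<dots> \<le> 1 * fq R" using gl gu unfolding fq_def by (intro mult_right_mono) auto
    also have "\<dots> \<le> norm R" using n1 unfolding fq_def by simp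
    finally show ?thesis .
  qed
  have vv: "\<bar>v\<bar> \<le> 2 * norm R" unfolding v_def fA_def fZ_def using n2 gq by linarith
  have sq: "sqrt (u^2 + v^2) \<le> \<bar>u\<bar> + \<bar>v\<bar>"
  proof -
    have "u^2 + v^2 \<le> (\<bar>u\<bar> + \<bar>v\<bar>)^2" by (simp add: power2_eq_square algebra_simps)
    then have "sqrt (u^2 + v^2) \<le> sqrt ((\<bar>u\<bar> + \<bar>v\<bar>)^2)" by (rule real_sqrt_le_mono)
    then show ?thesis by simp
  qed
  have ex: "exp (G * arctan (v / (sqrt (u^2 + v^2) + u))) \<le> exp (\<bar>G\<bar> * pi / 2)"
  proof -
    define a where "a = arctan (v / (sqrt (u^2 + v^2) + u))"
    have "-(pi/2) < a" "a < pi/2" using arctan_bounded unfolding a_def by auto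
    then have "\<bar>a\<bar> \<le> pi / 2" unfolding abs_le_iff by linarith
    then have "G * a \<le> \<bar>G\<bar> * (pi/2)"
      by (metis abs_ge_self abs_ge_zero abs_mult mult_left_mono order_trans)
    then show ?thesis unfolding a_def by simp
  qed
  have "finsleroidK g R = sqrt (u^2 + v^2) * exp (G * arctan (v / (sqrt (u^2 + v^2) + u)))"
    unfolding K_eq_all Kt_def u_def v_def ..
  also have "\<dots> \<le> (3 * norm R) * exp (\<bar>G\<bar> * pi / 2)"
    using sq uu vv ex by (intro mult_mono) auto
  finally show ?thesis by (simp add: algebra_simps)
qed

lemma zero_interior: "0 \<in> interior {R. finsleroidK g R \<le> 1}"
proof -
  define C where "C = 3 * exp (\<bar>G\<bar> * pi / 2)"
  have C: "C > 0" unfolding C_def by simp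
  have "ball 0 (1/C) \<subseteq> {R. finsleroidK g R \<le> 1}"
  proof
    fix R :: "real \<times> real" assume "R \<in> ball 0 (1/C)"
    then have "norm R < 1/C" by simp
    then have "C * norm R < 1" using C by (simp add: field_simps)
    then show "R \<in> {R. finsleroidK g R \<le> 1}" using K_bound[of R] unfolding C_def by simp
  qed
  then show ?thesis unfolding mem_interior using C by (intro exI[of _ "1/C"]) simp
qed

lemma interior_S: "interior {R. finsleroidK g R \<le> 1} = {R. finsleroidK g R < 1}"
proof
  show "interior {R. finsleroidK g R \<le> 1} \<subseteq> {R. finsleroidK g R < 1}"
  proof
    fix R assume R: "R \<in> interior {R. finsleroidK g R \<le> 1}"
    then obtain e where e: "e > 0" "ball R e \<subseteq> {R. finsleroidK g R \<le> 1}" unfolding mem_interior by blast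
    have K1: "finsleroidK g R \<le> 1" using R interior_subset by blast
    show "R \<in> {R. finsleroidK g R < 1}"
    proof (rule ccontr)
      assume "R \<notin> {R. finsleroidK g R < 1}"
      then have KR: "finsleroidK g R = 1" using K1 by simp
      then have R0: "R \<noteq> 0" using K_zero by auto
      define c where "c = 1 + e / (2 * norm R)"
      have c: "c > 1" unfolding c_def using e R0 by simp
      have "R - c *\<^sub>R R = (1 - c) *\<^sub>R R" by (simp add: algebra_simps)
      then have "dist R (c *\<^sub>R R) = \<bar>1 - c\<bar> * norm R" by (simp add: dist_norm)
      also have "\<bar>1 - c\<bar> = c - 1" using c by simp
      finally have "dist R (c *\<^sub>R R) = (c - 1) * norm R" .
      also have "\<dots> = e / 2" unfolding c_def using R0 by simp
      finally have "c *\<^sub>R R \<in> ball R e" using e by simp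
      then have "finsleroidK g (c *\<^sub>R R) \<le> 1" using e by auto
      moreover have "finsleroidK g (c *\<^sub>R R) = c" using K_hom[of c R] c KR by simp
      ultimately show False using c by simp
    qed
  qed
  show "{R. finsleroidK g R < 1} \<subseteq> interior {R. finsleroidK g R \<le> 1}"
  proof
    fix R assume R: "R \<in> {R. finsleroidK g R < 1}"
    show "R \<in> interior {R. finsleroidK g R \<le> 1}"
    proof (cases "R = 0")
      case True
      then show ?thesis using zero_interior by simp
    next
      case False
      define c where "c = finsleroidK g R"
      have c: "c > 0" "c < 1" using K_pos[OF False] R unfolding c_def by auto
      define R' where "R' = (1/c) *\<^sub>R R"
      have "finsleroidK g R' = 1" using K_hom[of "1/c" R] c unfolding c_def R'_def by simp
      then have R'S: "R' \<in> {R. finsleroidK g R \<le> 1}" by simp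
      have "R' - (1 - c) *\<^sub>R (R' - 0) \<in> interior {R. finsleroidK g R \<le> 1}"
        by (rule mem_interior_convex_shrink[OF convex_S zero_interior R'S]) (use c in auto)
      moreover have "R' - (1 - c) *\<^sub>R (R' - 0) = R"
      proof -
        have "R' - (1 - c) *\<^sub>R (R' - 0) = c *\<^sub>R R'" by (simp add: algebra_simps)
        also have "c *\<^sub>R R' = R" unfolding R'_def using c by simp
        finally show ?thesis .
      qed
      ultimately show ?thesis by simp
    qed
  qed
qed

lemma frontier_S: "frontier {R. finsleroidK g R \<le> 1} = {R. finsleroidK g R = 1}"
proof -
  have cl: "closure {R. finsleroidK g R \<le> 1} = {R. finsleroidK g R \<le> 1}"
    using S_compact by (simp add: compact_imp_closed)
  show ?thesis unfolding frontier_def cl interior_S by auto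
qed

end

theorem theorem1p2:
  fixes g :: real
  assumes "-2 < g" and "g < 2"
  shows "compact {R. finsleroidK g R \<le> 1}
       \<and> convex {R. finsleroidK g R \<le> 1}
       \<and> interior {R. finsleroidK g R \<le> 1} \<noteq> {}
       \<and> frontier {R. finsleroidK g R \<le> 1} = {R. finsleroidK g R = 1}
       \<and> (\<exists>(\<gamma> :: real \<Rightarrow> real \<times> real) d1 d2 L. L > 0
            \<and> (\<forall>t. \<gamma> (t + L) = \<gamma> t)
            \<and> inj_on \<gamma> {0..<L}
            \<and> \<gamma> ` {0..<L} = {R. finsleroidK g R = 1}
            \<and> (\<forall>t. (\<gamma> has_vector_derivative d1 t) (at t))
            \<and> (\<forall>t. (d1 has_vector_derivative d2 t) (at t))
            \<and> (\<forall>t. d1 t \<noteq> 0)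
            \<and> (\<forall>t. signed_curvature (d1 t) (d2 t) > 0))"
proof -
  interpret fins g using assms by unfold_locales
  have ex: "\<exists>(\<gamma> :: real \<Rightarrow> real \<times> real) d1 d2 L. L > 0
            \<and> (\<forall>t. \<gamma> (t + L) = \<gamma> t)
            \<and> inj_on \<gamma> {0..<L}
            \<and> \<gamma> ` {0..<L} = {R. finsleroidK g R = 1}
            \<and> (\<forall>t. (\<gamma> has_vector_derivative d1 t) (at t))
            \<and> (\<forall>t. (d1 has_vector_derivative d2 t) (at t))
            \<and> (\<forall>t. d1 t \<noteq> 0)
            \<and> (\<forall>t. signed_curvature (d1 t) (d2 t) > 0)"
    using L_pos gam_per gam_inj gam_img gam_deriv dd1_deriv dd1_nz curv_pos by blast
  have int: "interior {R. finsleroidK g R \<le> 1} \<noteq> {}" using zero_interior by blast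
  show ?thesis using S_compact convex_S int frontier_S ex by blast
qed


end
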